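(* Let $\rho,\rho',\sigma$ be quantum states on a finite-dimensional Hilbert space such that $\rho$ and $\rho'$ both commute with $\sigma$ (but not necessarily with each other). Then there exists a unitary channel $\mathcal U$ such that (i) $[\rho,\mathcal U(\rho')]=0$, (ii) $D(\rho,\mathcal U(\rho'))\le D(\rho,\rho')$, and (iii) $\mathcal U(\rho')$ commutes with $\sigma$.
   Context: $D(\rho,\tau)=\frac12\|\rho-\tau\|_1$ is the trace distance; a unitary channel is a map $X\mapsto UXU^\dagger$ with $U$ unitary. *)

theory Defs
  imports "Jordan_Normal_Form.Schur_Decomposition" "HOL-Computational_Algebra.Fundamental_Theorem_Algebra"
begin

(* Hermitian n x n complex matrix *)
definition hermitian_mat :: "nat \<Rightarrow> complex mat \<Rightarrow> bool" where
  "hermitian_mat n A \<longleftrightarrow> A \<in> carrier_mat n n \<and> mat_adjoint A = A"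

(* positive semidefinite: Hermitian with <v, A v> >= 0 for all v *)
definition psd_mat :: "nat \<Rightarrow> complex mat \<Rightarrow> bool" where
  "psd_mat n A \<longleftrightarrow> hermitian_mat n A \<and>
     (\<forall>v \<in> carrier_vec n. 0 \<le> Re ((A *\<^sub>v v) \<bullet>c v))"

definition mat_trace :: "complex mat \<Rightarrow> complex" where
  "mat_trace A = (\<Sum>i<dim_row A. A $$ (i, i))"

(* quantum state (density matrix) on C^n *)
definition density_mat :: "nat \<Rightarrow> complex mat \<Rightarrow> bool" where
  "density_mat n \<rho> \<longleftrightarrow> psd_mat n \<rho> \<and> mat_trace \<rho> = 1"

definition unitary_mat :: "nat \<Rightarrow> complex mat \<Rightarrow> bool" where
  "unitary_mat n U \<longleftrightarrow> U \<in> carrier_mat n n \<and> U * mat_adjoint U = 1\<^sub>m n \<and> mat_adjoint U * U = 1\<^sub>m n"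

(* unitary channel X \<mapsto> U X U^\<dagger> *)
definition unitary_channel :: "complex mat \<Rightarrow> complex mat \<Rightarrow> complex mat" where
  "unitary_channel U X = U * X * mat_adjoint U"

(* trace norm = sum of singular values, i.e. of square roots of the eigenvalues
   (with algebraic multiplicity) of A^\<dagger> A *)
definition trace_norm :: "complex mat \<Rightarrow> real" where
  "trace_norm A = (\<Sum>x \<in># proots (char_poly (mat_adjoint A * A)). sqrt (Re x))"

(* trace distance D(\<rho>,\<tau>) = 1/2 ||\<rho> - \<tau>||_1 *)
definition trace_dist :: "complex mat \<Rightarrow> complex mat \<Rightarrow> real" where
  "trace_dist \<rho> \<tau> = trace_norm (\<rho> - \<tau>) / 2"

end

theory Submission
  imports Defs "HOL-Combinatorics.List_Permutation"
begin

(* ---- W ---- *)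
lemma adj_dims[simp]: "dim_row (mat_adjoint A) = dim_col A" "dim_col (mat_adjoint A) = dim_row A"
  by (auto simp: mat_adjoint_def mat_of_rows_def)

lemma adj_index[simp]: "i < dim_col A \<Longrightarrow> j < dim_row A \<Longrightarrow> mat_adjoint (A :: complex mat) $$ (i,j) = cnj (A $$ (j,i))"
  by (auto simp: mat_adjoint_def mat_of_rows_def)

lemma adj_carrier[simp]: "A \<in> carrier_mat n m \<Longrightarrow> mat_adjoint A \<in> carrier_mat m n"
  unfolding carrier_mat_def by simp

lemma adj_adj[simp]: "mat_adjoint (mat_adjoint (A :: complex mat)) = A"
  by (rule eq_matI, auto)

lemma adj_mult: assumes "(A :: complex mat) \<in> carrier_mat n m" "B \<in> carrier_mat m k"
  shows "mat_adjoint (A * B) = mat_adjoint B * mat_adjoint A"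
proof (rule eq_matI)
  fix i j assume "i < dim_row (mat_adjoint B * mat_adjoint A)" "j < dim_col (mat_adjoint B * mat_adjoint A)"
  hence ij: "i < k" "j < n" using assms by auto
  have "mat_adjoint (A * B) $$ (i,j) = cnj (\<Sum>l<m. A $$ (j,l) * B $$ (l,i))"
    using assms ij by (simp add: scalar_prod_def atLeast0LessThan)
  also have "\<dots> = (\<Sum>l<m. cnj (B $$ (l,i)) * cnj (A $$ (j,l)))"
    by (simp add: mult.commute)
  also have "\<dots> = (mat_adjoint B * mat_adjoint A) $$ (i,j)"
    using assms ij by (simp add: scalar_prod_def atLeast0LessThan)
  finally show "mat_adjoint (A * B) $$ (i,j) = (mat_adjoint B * mat_adjoint A) $$ (i,j)" .
qed (use assms in auto)

lemma adj_minus: assumes "(A :: complex mat) \<in> carrier_mat n m" "B \<in> carrier_mat n m"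
  shows "mat_adjoint (A - B) = mat_adjoint A - mat_adjoint B"
  using assms by (intro eq_matI) auto

lemma adj_plus: assumes "(A :: complex mat) \<in> carrier_mat n m" "B \<in> carrier_mat n m"
  shows "mat_adjoint (A + B) = mat_adjoint A + mat_adjoint B"
  using assms by (intro eq_matI) auto

definition dmat :: "nat \<Rightarrow> (nat \<Rightarrow> complex) \<Rightarrow> complex mat" where
  "dmat n d = mat n n (\<lambda>(i,j). if i = j then d i else 0)"

lemma dmat_carrier[simp]: "dmat n d \<in> carrier_mat n n" by (simp add: dmat_def)
lemma dmat_dims[simp]: "dim_row (dmat n d) = n" "dim_col (dmat n d) = n" by (auto simp: dmat_def)
lemma dmat_index[simp]: "i < n \<Longrightarrow> j < n \<Longrightarrow> dmat n d $$ (i,j) = (if i = j then d i else 0)"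
  by (simp add: dmat_def)

lemma sum_delta_nat: "j < (n::nat) \<Longrightarrow> (\<Sum>k<n. (if k = j then f k else 0)) = (f j :: 'a :: comm_monoid_add)"
  by (subst sum.delta) auto

lemma sum_delta_nat': "j < (n::nat) \<Longrightarrow> (\<Sum>k<n. (if j = k then f k else 0)) = (f j :: 'a :: comm_monoid_add)"
  by (subst sum.delta') auto

lemma dmat_mult: "dmat n a * dmat n b = dmat n (\<lambda>i. a i * b i)"
proof (rule eq_matI)
  fix i j assume "i < dim_row (dmat n (\<lambda>i. a i * b i))" "j < dim_col (dmat n (\<lambda>i. a i * b i))"
  hence ij: "i < n" "j < n" by auto
  have "(dmat n a * dmat n b) $$ (i,j) = (\<Sum>k<n. dmat n a $$ (i,k) * dmat n b $$ (k,j))"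
    using ij by (simp add: scalar_prod_def atLeast0LessThan)
  also have "\<dots> = (\<Sum>k<n. if k = i then a i * (if i = j then b i else 0) else 0)"
    using ij by (intro sum.cong) auto
  also have "\<dots> = dmat n (\<lambda>i. a i * b i) $$ (i,j)" using ij by (subst sum_delta_nat) auto
  finally show "(dmat n a * dmat n b) $$ (i,j) = dmat n (\<lambda>i. a i * b i) $$ (i,j)" .
qed auto

lemma dmat_comm: "dmat n a * dmat n b = dmat n b * dmat n a"
  by (simp add: dmat_mult mult.commute)

lemma adj_dmat: "mat_adjoint (dmat n a) = dmat n (\<lambda>i. cnj (a i))"
  by (rule eq_matI) auto

lemma dmat_minus: "dmat n a - dmat n b = dmat n (\<lambda>i. a i - b i)"
  by (rule eq_matI) auto
lemma dmat_plus: "dmat n a + dmat n b = dmat n (\<lambda>i. a i + b i)"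
  by (rule eq_matI) auto


(* ---- W2 ---- *)
lemma cscalar_def': "x \<in> carrier_vec n \<Longrightarrow> y \<in> carrier_vec n \<Longrightarrow> x \<bullet>c (y :: complex vec) = (\<Sum>i<n. x $ i * cnj (y $ i))"
  by (simp add: scalar_prod_def atLeast0LessThan)

lemma mult_mat_vec_index': "A \<in> carrier_mat n m \<Longrightarrow> x \<in> carrier_vec m \<Longrightarrow> i < n \<Longrightarrow> (A *\<^sub>v x) $ i = (\<Sum>k<m. A $$ (i,k) * x $ k)"
  by (simp add: scalar_prod_def atLeast0LessThan)

lemma adj_ip: assumes A: "(A :: complex mat) \<in> carrier_mat n m" and x: "x \<in> carrier_vec m" and y: "y \<in> carrier_vec n"
  shows "(A *\<^sub>v x) \<bullet>c y = x \<bullet>c (mat_adjoint A *\<^sub>v y)"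
proof -
  have "(A *\<^sub>v x) \<bullet>c y = (\<Sum>r<n. (\<Sum>k<m. A $$ (r,k) * x $ k) * cnj (y $ r))"
    using A x y by (simp add: cscalar_def'[of _ n] scalar_prod_def atLeast0LessThan)
  also have "\<dots> = (\<Sum>r<n. \<Sum>k<m. x $ k * (A $$ (r,k) * cnj (y $ r)))"
    by (simp add: sum_distrib_left sum_distrib_right mult_ac)
  also have "\<dots> = (\<Sum>k<m. \<Sum>r<n. x $ k * (A $$ (r,k) * cnj (y $ r)))"
    by (rule sum.swap)
  also have "\<dots> = (\<Sum>k<m. x $ k * cnj (\<Sum>r<n. cnj (A $$ (r,k)) * y $ r))"
    by (simp add: sum_distrib_left)
  also have "\<dots> = x \<bullet>c (mat_adjoint A *\<^sub>v y)"
  proof -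
    have c: "mat_adjoint A *\<^sub>v y \<in> carrier_vec m" by (rule mult_mat_vec_carrier[OF adj_carrier[OF A] y])
    show ?thesis unfolding cscalar_def'[OF x c] using A y
      by (intro sum.cong refl) (simp add: scalar_prod_def atLeast0LessThan)
  qed
  finally show ?thesis .
qed

lemma herm_ip: assumes "hermitian_mat n A" "x \<in> carrier_vec n" "y \<in> carrier_vec n"
  shows "(A *\<^sub>v x) \<bullet>c y = x \<bullet>c (A *\<^sub>v y)"
  using assms adj_ip[of A n n x y] unfolding hermitian_mat_def by auto

lemma unitary_ip: assumes U: "(U :: complex mat) \<in> carrier_mat n n" and UU: "mat_adjoint U * U = 1\<^sub>m n"
  and p: "p \<in> carrier_vec n" and q: "q \<in> carrier_vec n"
  shows "(U *\<^sub>v p) \<bullet>c (U *\<^sub>v q) = p \<bullet>c q"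
proof -
  have "(U *\<^sub>v p) \<bullet>c (U *\<^sub>v q) = p \<bullet>c (mat_adjoint U *\<^sub>v (U *\<^sub>v q))"
    using adj_ip[OF U p] U q by auto
  also have "mat_adjoint U *\<^sub>v (U *\<^sub>v q) = (mat_adjoint U * U) *\<^sub>v q"
    using U q by (simp add: assoc_mult_mat_vec[of _ n n _ n])
  finally show ?thesis using UU q by simp
qed

lemma cnj_mult_self: "(z :: complex) * cnj z = of_real ((cmod z)^2)"
  by (simp only: complex_norm_square)

lemma self_ip: "x \<in> carrier_vec n \<Longrightarrow> x \<bullet>c (x :: complex vec) = of_real (\<Sum>i<n. (cmod (x $ i))^2)"
  by (simp add: cscalar_def'[of _ n] cnj_mult_self)

lemma underdet: assumes M: "(M :: complex mat) \<in> carrier_mat m k" and mk: "m < k"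
  shows "\<exists>c. c \<in> carrier_vec k \<and> c \<noteq> 0\<^sub>v k \<and> M *\<^sub>v c = 0\<^sub>v m"
proof -
  define M' where "M' = mat\<^sub>r k k (\<lambda>i. if i = k - 1 then 0\<^sub>v k else (if i < m then row M i else 0\<^sub>v k))"
  have M'c: "M' \<in> carrier_mat k k" unfolding M'_def by auto
  have "det M' = 0" unfolding M'_def
    by (rule det_row_0) (use mk M in auto)
  then obtain c where c: "c \<in> carrier_vec k" "c \<noteq> 0\<^sub>v k" "M' *\<^sub>v c = 0\<^sub>v k"
    using det_0_iff_vec_prod_zero[OF M'c] by auto
  have "M *\<^sub>v c = 0\<^sub>v m"
  proof (rule eq_vecI)
    fix i assume "i < dim_vec (0\<^sub>v m :: complex vec)"
    hence i: "i < m" by auto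
    have "(M' *\<^sub>v c) $ i = (0\<^sub>v k) $ i" by (simp only: c(3))
    hence "(M' *\<^sub>v c) $ i = 0" using i mk by simp
    moreover have "(M' *\<^sub>v c) $ i = (M *\<^sub>v c) $ i"
      using i mk M c(1) unfolding M'_def by auto
    ultimately show "(M *\<^sub>v c) $ i = 0\<^sub>v m $ i" using i by simp
  qed (use M in auto)
  with c show ?thesis by auto
qed


(* ---- W3 ---- *)
lemma vec_minus_eq0: assumes "a \<in> carrier_vec n" "b \<in> carrier_vec n" "a - b = 0\<^sub>v n"
  shows "a = (b :: complex vec)"
proof (rule eq_vecI)
  fix i assume "i < dim_vec b"
  hence i: "i < n" using assms by auto
  have "(a - b) $ i = 0" using assms(3) i by (metis index_zero_vec(1))
  thus "a $ i = b $ i" using assms(1,2) i by simp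
qed (use assms in auto)

definition Apow :: "complex mat \<Rightarrow> nat \<Rightarrow> complex vec \<Rightarrow> complex vec" where
  "Apow A i w = ((\<lambda>x. A *\<^sub>v x) ^^ i) w"

lemma Apow_0[simp]: "Apow A 0 w = w" by (simp add: Apow_def)
lemma Apow_Suc[simp]: "Apow A (Suc i) w = A *\<^sub>v Apow A i w" by (simp add: Apow_def)
lemma Apow_carrier: "A \<in> carrier_mat n n \<Longrightarrow> w \<in> carrier_vec n \<Longrightarrow> Apow A i w \<in> carrier_vec n"
  by (induction i) auto

primrec Rf :: "complex mat \<Rightarrow> (nat \<Rightarrow> complex) \<Rightarrow> nat \<Rightarrow> complex vec \<Rightarrow> complex vec" where
  "Rf A rt 0 w = w"
| "Rf A rt (Suc m) w = A *\<^sub>v Rf A rt m w - rt m \<cdot>\<^sub>v Rf A rt m w"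

lemma Rf_carrier: "A \<in> carrier_mat n n \<Longrightarrow> w \<in> carrier_vec n \<Longrightarrow> Rf A rt m w \<in> carrier_vec n"
  by (induction m) auto

lemma coeff_mult_lin: "coeff ((p :: complex poly) * [:b, 1:]) i = b * coeff p i + (case i of 0 \<Rightarrow> 0 | Suc j \<Rightarrow> coeff p j)"
proof -
  have "p * [:b, 1:] = smult b p + pCons 0 p"
    by (simp add: mult.commute mult_pCons_left smult_one)
  thus ?thesis by (simp add: coeff_pCons split: nat.splits)
qed

definition Pi_rt :: "(nat \<Rightarrow> complex) \<Rightarrow> nat \<Rightarrow> complex poly" where
  "Pi_rt rt m = (\<Prod>i<m. [:- rt i, 1:])"

lemma degree_Pi_rt: "degree (Pi_rt rt m) = m"
proof -
  have "degree (\<Prod>i<m. [:- rt i, 1:]) = (\<Sum>i<m. degree [:- rt i, 1:])"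
    by (rule degree_prod_eq_sum_degree) auto
  thus ?thesis by (simp add: Pi_rt_def)
qed

lemma Rf_eval: assumes A: "A \<in> carrier_mat n n" and w: "w \<in> carrier_vec n"
  shows "\<forall>r<n. Rf A rt m w $ r = (\<Sum>i\<le>m. coeff (Pi_rt rt m) i * Apow A i w $ r)"
proof (induction m)
  case 0
  then show ?case by (simp add: Pi_rt_def)
next
  case (Suc m)
  let ?p = "Pi_rt rt m"
  have PS: "Pi_rt rt (Suc m) = ?p * [:- rt m, 1:]" by (simp add: Pi_rt_def)
  have cz: "coeff ?p (Suc m) = 0" using degree_Pi_rt[of rt m] by (simp add: coeff_eq_0)
  show ?case
  proof (intro allI impI)
    fix r assume r: "r < n"
    have "(\<Sum>i\<le>Suc m. coeff (Pi_rt rt (Suc m)) i * Apow A i w $ r)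
      = (\<Sum>i\<le>Suc m. (- rt m) * (coeff ?p i * Apow A i w $ r))
        + (\<Sum>i\<le>Suc m. (case i of 0 \<Rightarrow> 0 | Suc j \<Rightarrow> coeff ?p j) * Apow A i w $ r)"
      unfolding PS coeff_mult_lin by (subst sum.distrib[symmetric], rule sum.cong, simp, simp add: algebra_simps)
    also have "(\<Sum>i\<le>Suc m. (- rt m) * (coeff ?p i * Apow A i w $ r)) = (- rt m) * Rf A rt m w $ r"
      using Suc r cz by (simp add: sum_negf sum_distrib_left)
    also have "(\<Sum>i\<le>Suc m. (case i of 0 \<Rightarrow> 0 | Suc j \<Rightarrow> coeff ?p j) * Apow A i w $ r)
       = (\<Sum>i\<le>m. coeff ?p i * Apow A (Suc i) w $ r)"
      by (subst sum.atMost_Suc_shift) simp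
    also have "\<dots> = (\<Sum>i\<le>m. coeff ?p i * (\<Sum>k<n. A $$ (r,k) * Apow A i w $ k))"
      by (intro sum.cong refl) (subst Apow_Suc, subst mult_mat_vec_index'[OF A Apow_carrier[OF A w] r], rule refl)
    also have "\<dots> = (\<Sum>i\<le>m. \<Sum>k<n. A $$ (r,k) * (coeff ?p i * Apow A i w $ k))"
      by (simp add: sum_distrib_left mult_ac)
    also have "\<dots> = (\<Sum>k<n. \<Sum>i\<le>m. A $$ (r,k) * (coeff ?p i * Apow A i w $ k))"
      by (rule sum.swap)
    also have "\<dots> = (\<Sum>k<n. A $$ (r,k) * (\<Sum>i\<le>m. coeff ?p i * Apow A i w $ k))"
      by (simp add: sum_distrib_left)
    also have "\<dots> = (\<Sum>k<n. A $$ (r,k) * Rf A rt m w $ k)"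
      using Suc by (intro sum.cong refl) simp
    also have "\<dots> = (A *\<^sub>v Rf A rt m w) $ r"
      by (rule mult_mat_vec_index'[OF A Rf_carrier[OF A w] r, symmetric])
    finally show "Rf A rt (Suc m) w $ r = (\<Sum>i\<le>Suc m. coeff (Pi_rt rt (Suc m)) i * Apow A i w $ r)"
      using r A Rf_carrier[OF A w, of rt m] by simp
  qed
qed

lemma Rf_extract:
  assumes A: "A \<in> carrier_mat n n"
    and Pc: "\<And>x. P x \<Longrightarrow> x \<in> carrier_vec n"
    and PA: "\<And>x. P x \<Longrightarrow> P (A *\<^sub>v x)"
    and Pm: "\<And>x y. P x \<Longrightarrow> P y \<Longrightarrow> P (x - y)"
    and Ps: "\<And>x c. P x \<Longrightarrow> P (c \<cdot>\<^sub>v x)"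
  shows "P w \<Longrightarrow> w \<noteq> 0\<^sub>v n \<Longrightarrow> Rf A rt m w = 0\<^sub>v n \<Longrightarrow> \<exists>u \<mu>. P u \<and> u \<noteq> 0\<^sub>v n \<and> A *\<^sub>v u = \<mu> \<cdot>\<^sub>v u"
proof (induction m)
  case 0
  then show ?case by simp
next
  case (Suc m)
  have PR: "P (Rf A rt m w)"
  proof (induction m)
    case 0 then show ?case using Suc.prems by simp
  next
    case (Suc k) then show ?case using PA Pm Ps by simp
  qed
  show ?case
  proof (cases "Rf A rt m w = 0\<^sub>v n")
    case True then show ?thesis using Suc by blast
  next
    case False
    let ?x = "Rf A rt m w"
    have xc: "?x \<in> carrier_vec n" using Pc PR by blast
    have "A *\<^sub>v ?x - rt m \<cdot>\<^sub>v ?x = 0\<^sub>v n" using Suc.prems(3) unfolding Rf.simps .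
    moreover have c1: "A *\<^sub>v ?x \<in> carrier_vec n" using A xc by simp
    moreover have c2: "rt m \<cdot>\<^sub>v ?x \<in> carrier_vec n" using xc by simp
    ultimately have "A *\<^sub>v ?x = rt m \<cdot>\<^sub>v ?x"
      using vec_minus_eq0 by blast
    then show ?thesis using PR False by blast
  qed
qed


(* ---- W4 ---- *)
lemma eigvec_sub:
  assumes A: "(A :: complex mat) \<in> carrier_mat n n"
    and Pc: "\<And>x. P x \<Longrightarrow> x \<in> carrier_vec n"
    and PA: "\<And>x. P x \<Longrightarrow> P (A *\<^sub>v x)"
    and Pm: "\<And>x y. P x \<Longrightarrow> P y \<Longrightarrow> P (x - y)"
    and Ps: "\<And>x c. P x \<Longrightarrow> P (c \<cdot>\<^sub>v x)"
    and Pv: "P v" and v0: "v \<noteq> 0\<^sub>v n"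
  shows "\<exists>u \<mu>. P u \<and> u \<noteq> 0\<^sub>v n \<and> A *\<^sub>v u = \<mu> \<cdot>\<^sub>v u"
proof -
  have v: "v \<in> carrier_vec n" using Pc Pv .
  define K where "K = mat n (Suc n) (\<lambda>(r,j). Apow A j v $ r)"
  have Kc: "K \<in> carrier_mat n (Suc n)" by (simp add: K_def)
  obtain c where c: "c \<in> carrier_vec (Suc n)" "c \<noteq> 0\<^sub>v (Suc n)" "K *\<^sub>v c = 0\<^sub>v n"
    using underdet[OF Kc] by auto
  have rel: "(\<Sum>j<Suc n. c $ j * Apow A j v $ r) = 0" if r: "r < n" for r
  proof -
    have "(K *\<^sub>v c) $ r = (0\<^sub>v n) $ r" by (simp only: c(3))
    hence "(K *\<^sub>v c) $ r = 0" using r by simp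
    moreover have "(K *\<^sub>v c) $ r = (\<Sum>j<Suc n. K $$ (r,j) * c $ j)" by (rule mult_mat_vec_index'[OF Kc c(1) r])
    ultimately show ?thesis using r by (simp add: K_def mult.commute)
  qed
  define q where "q = (\<Sum>j<Suc n. monom (c $ j) j)"
  have cq: "coeff q i = (if i < Suc n then c $ i else 0)" for i
  proof -
    have "coeff q i = (\<Sum>j<Suc n. if j = i then c $ j else 0)"
      unfolding q_def coeff_sum coeff_monom by (auto intro: sum.cong)
    also have "\<dots> = (if i < Suc n then c $ i else 0)"
      by (cases "i < Suc n") (auto simp: sum_delta_nat)
    finally show ?thesis .
  qed
  have "\<exists>j<Suc n. c $ j \<noteq> 0"
  proof (rule ccontr)
    assume "\<not> ?thesis"
    hence "c = 0\<^sub>v (Suc n)" using c(1) by (intro eq_vecI) auto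
    with c(2) show False by simp
  qed
  then obtain j where j: "j < Suc n" "c $ j \<noteq> 0" by auto
  have q0: "q \<noteq> 0"
  proof
    assume "q = 0"
    hence "coeff q j = 0" by simp
    with j cq show False by simp
  qed
  have dq: "degree q \<le> n" by (rule degree_le) (simp add: cq)
  obtain rt where rt: "smult (lead_coeff q) (\<Prod>i<degree q. [:-rt i, 1:]) = q"
    using complex_poly_decompose' by blast
  define d where "d = degree q"
  have qPi: "q = smult (lead_coeff q) (Pi_rt rt d)" using rt by (simp add: Pi_rt_def d_def)
  obtain l where l: "l = lead_coeff q" by simp
  have cqP: "coeff q i = l * coeff (Pi_rt rt d) i" for i
    using arg_cong[OF qPi, of "\<lambda>p. coeff p i"] l by simp
  have lq: "l \<noteq> 0" using q0 l by simp
  have "Rf A rt d v = 0\<^sub>v n"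
  proof (rule eq_vecI)
    fix r assume "r < dim_vec (0\<^sub>v n :: complex vec)"
    hence r: "r < n" by simp
    have "0 = (\<Sum>j<Suc n. c $ j * Apow A j v $ r)" using rel r by simp
    also have "\<dots> = (\<Sum>j\<le>n. coeff q j * Apow A j v $ r)"
      by (simp add: cq lessThan_Suc_atMost)
    also have "\<dots> = (\<Sum>j\<le>d. coeff q j * Apow A j v $ r)"
    proof (rule sum.mono_neutral_right)
      show "{..d} \<subseteq> {..n}" using dq unfolding d_def by auto
      show "\<forall>i\<in>{..n} - {..d}. coeff q i * Apow A i v $ r = 0"
      proof
        fix i assume "i \<in> {..n} - {..d}"
        hence "degree q < i" unfolding d_def by auto
        hence "coeff q i = 0" by (rule coeff_eq_0)
        thus "coeff q i * Apow A i v $ r = 0" by simp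
      qed
    qed simp
    also have "\<dots> = l * (\<Sum>j\<le>d. coeff (Pi_rt rt d) j * Apow A j v $ r)"
      by (simp only: cqP sum_distrib_left mult.assoc)
    also have "\<dots> = l * Rf A rt d v $ r"
      using Rf_eval[OF A v, of rt d] r by simp
    finally have "l * Rf A rt d v $ r = 0" by simp
    with lq show "Rf A rt d v $ r = 0\<^sub>v n $ r" using r by simp
  qed (use Rf_carrier[OF A v] in auto)
  then show ?thesis using Rf_extract[OF A Pc PA Pm Ps Pv v0] by blast
qed


(* ---- W5 ---- *)
lemma cip_smult_right: "x \<in> carrier_vec n \<Longrightarrow> y \<in> carrier_vec n \<Longrightarrow> x \<bullet>c (a \<cdot>\<^sub>v y) = cnj a * (x \<bullet>c (y :: complex vec))"
  by (simp add: cscalar_def'[of _ n] sum_distrib_left mult_ac)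

lemma cip_smult_left: "x \<in> carrier_vec n \<Longrightarrow> y \<in> carrier_vec n \<Longrightarrow> (a \<cdot>\<^sub>v x) \<bullet>c y = a * (x \<bullet>c (y :: complex vec))"
  by (simp add: cscalar_def'[of _ n] sum_distrib_left mult_ac)

lemma cip_minus_left: "x \<in> carrier_vec n \<Longrightarrow> y \<in> carrier_vec n \<Longrightarrow> z \<in> carrier_vec n \<Longrightarrow> (x - y) \<bullet>c z = x \<bullet>c z - y \<bullet>c (z :: complex vec)"
  by (simp add: cscalar_def'[of _ n] sum_subtractf algebra_simps)

lemma cip_sym: "x \<in> carrier_vec n \<Longrightarrow> y \<in> carrier_vec n \<Longrightarrow> x \<bullet>c y = cnj (y \<bullet>c (x :: complex vec))"
  by (simp add: cscalar_def'[of _ n] mult_ac)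

lemma mv_smult: "(A :: complex mat) \<in> carrier_mat n m \<Longrightarrow> x \<in> carrier_vec m \<Longrightarrow> A *\<^sub>v (c \<cdot>\<^sub>v x) = c \<cdot>\<^sub>v (A *\<^sub>v x)"
  by (rule mult_mat_vec)

lemma mv_minus: "(A :: complex mat) \<in> carrier_mat n m \<Longrightarrow> x \<in> carrier_vec m \<Longrightarrow> y \<in> carrier_vec m \<Longrightarrow> A *\<^sub>v (x - y) = A *\<^sub>v x - A *\<^sub>v y"
  by (rule mult_minus_distrib_mat_vec)

lemma smult_minus_vec: "x \<in> carrier_vec n \<Longrightarrow> y \<in> carrier_vec n \<Longrightarrow> c \<cdot>\<^sub>v (x - y) = c \<cdot>\<^sub>v x - c \<cdot>\<^sub>v (y :: complex vec)"
  by (intro eq_vecI) (auto simp: algebra_simps)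

lemma smult_comm_vec: "a \<cdot>\<^sub>v (b \<cdot>\<^sub>v x) = b \<cdot>\<^sub>v (a \<cdot>\<^sub>v (x :: complex vec))"
  by (simp add: smult_smult_assoc mult.commute)

lemma herm_carrier: "hermitian_mat n A \<Longrightarrow> A \<in> carrier_mat n n"
  by (simp add: hermitian_mat_def)

lemma joint_step:
  assumes HA: "hermitian_mat n A" and HB: "hermitian_mat n B" and AB: "A * B = B * A"
    and k: "k < n"
    and uc: "\<forall>i<k. u i \<in> carrier_vec n"
    and ua: "\<forall>i<k. A *\<^sub>v u i = \<alpha> i \<cdot>\<^sub>v u i"
    and ub: "\<forall>i<k. B *\<^sub>v u i = \<beta> i \<cdot>\<^sub>v u i"
  shows "\<exists>x \<mu> \<nu>. x \<in> carrier_vec n \<and> x \<bullet>c x = 1 \<and> (\<forall>i<k. x \<bullet>c u i = 0) \<and>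
     A *\<^sub>v x = \<mu> \<cdot>\<^sub>v x \<and> B *\<^sub>v x = \<nu> \<cdot>\<^sub>v x"
proof -
  have A: "A \<in> carrier_mat n n" and B: "B \<in> carrier_mat n n" using HA HB herm_carrier by auto
  define M where "M = mat k n (\<lambda>(i,r). cnj (u i $ r))"
  have Mc: "M \<in> carrier_mat k n" by (simp add: M_def)
  obtain y where y: "y \<in> carrier_vec n" "y \<noteq> 0\<^sub>v n" "M *\<^sub>v y = 0\<^sub>v k"
    using underdet[OF Mc k] by auto
  define P1 where "P1 x \<longleftrightarrow> x \<in> carrier_vec n \<and> (\<forall>i<k. x \<bullet>c u i = 0)" for x
  have P1y: "P1 y"
  proof -
    have "y \<bullet>c u i = 0" if i: "i < k" for i
    proof -
      have "(M *\<^sub>v y) $ i = (0\<^sub>v k) $ i" by (simp only: y(3))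
      hence "(M *\<^sub>v y) $ i = 0" using i by simp
      moreover have "(M *\<^sub>v y) $ i = (\<Sum>r<n. M $$ (i,r) * y $ r)" by (rule mult_mat_vec_index'[OF Mc y(1) i])
      moreover have "y \<bullet>c u i = (\<Sum>r<n. y $ r * cnj (u i $ r))" using y(1) uc i by (simp add: cscalar_def'[of _ n])
      ultimately show ?thesis using i by (simp add: M_def mult.commute)
    qed
    thus ?thesis using y(1) unfolding P1_def by auto
  qed
  have P1c: "\<And>x. P1 x \<Longrightarrow> x \<in> carrier_vec n" unfolding P1_def by auto
  have P1m: "P1 (x - z)" if "P1 x" "P1 z" for x z
    using that uc unfolding P1_def by (auto simp: cip_minus_left[of _ n])
  have P1s: "P1 (c \<cdot>\<^sub>v x)" if "P1 x" for x c
    using that uc unfolding P1_def by (auto simp: cip_smult_left[of _ n])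
  have P1H: "P1 (H *\<^sub>v x)" if H: "hermitian_mat n H" and Hu: "\<forall>i<k. H *\<^sub>v u i = \<gamma> i \<cdot>\<^sub>v u i" and x: "P1 x" for H x \<gamma>
  proof -
    have xc: "x \<in> carrier_vec n" using x P1_def by auto
    have Hc: "H \<in> carrier_mat n n" using H herm_carrier by auto
    have "(H *\<^sub>v x) \<bullet>c u i = 0" if i: "i < k" for i
    proof -
      have "(H *\<^sub>v x) \<bullet>c u i = x \<bullet>c (H *\<^sub>v u i)" using herm_ip[OF H xc] uc i by auto
      also have "\<dots> = x \<bullet>c (\<gamma> i \<cdot>\<^sub>v u i)" using Hu i by simp
      also have "\<dots> = cnj (\<gamma> i) * (x \<bullet>c u i)" using xc uc i by (simp add: cip_smult_right[of _ n])
      finally show ?thesis using x i unfolding P1_def by simp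
    qed
    thus ?thesis using Hc xc unfolding P1_def by auto
  qed
  obtain w1 \<mu> where w1: "P1 w1" "w1 \<noteq> 0\<^sub>v n" "A *\<^sub>v w1 = \<mu> \<cdot>\<^sub>v w1"
    using eigvec_sub[OF A P1c P1H[OF HA ua] P1m P1s P1y y(2)] by blast
  define P2 where "P2 x \<longleftrightarrow> P1 x \<and> A *\<^sub>v x = \<mu> \<cdot>\<^sub>v x" for x
  have P2c: "\<And>x. P2 x \<Longrightarrow> x \<in> carrier_vec n" unfolding P2_def using P1c by auto
  have P2m: "P2 (x - z)" if "P2 x" "P2 z" for x z
  proof -
    have xz: "x \<in> carrier_vec n" "z \<in> carrier_vec n" using that P2c by auto
    have "A *\<^sub>v (x - z) = A *\<^sub>v x - A *\<^sub>v z" by (rule mv_minus[OF A xz])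
    also have "\<dots> = \<mu> \<cdot>\<^sub>v x - \<mu> \<cdot>\<^sub>v z" using that unfolding P2_def by simp
    also have "\<dots> = \<mu> \<cdot>\<^sub>v (x - z)" by (rule smult_minus_vec[OF xz, symmetric])
    finally show ?thesis using that P1m unfolding P2_def by auto
  qed
  have P2s: "P2 (c \<cdot>\<^sub>v x)" if "P2 x" for x c
  proof -
    have xc: "x \<in> carrier_vec n" using that P2c by auto
    have "A *\<^sub>v (c \<cdot>\<^sub>v x) = c \<cdot>\<^sub>v (A *\<^sub>v x)" by (rule mv_smult[OF A xc])
    also have "\<dots> = \<mu> \<cdot>\<^sub>v (c \<cdot>\<^sub>v x)" using that unfolding P2_def by (simp add: smult_comm_vec)
    finally show ?thesis using that P1s unfolding P2_def by auto
  qed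
  have P2B: "P2 (B *\<^sub>v x)" if "P2 x" for x
  proof -
    have xc: "x \<in> carrier_vec n" using that P2c by auto
    have "A *\<^sub>v (B *\<^sub>v x) = (A * B) *\<^sub>v x" using A B xc by simp
    also have "\<dots> = B *\<^sub>v (A *\<^sub>v x)" using A B xc AB by simp
    also have "\<dots> = B *\<^sub>v (\<mu> \<cdot>\<^sub>v x)" using that unfolding P2_def by simp
    also have "\<dots> = \<mu> \<cdot>\<^sub>v (B *\<^sub>v x)" by (rule mv_smult[OF B xc])
    finally show ?thesis using that P1H[OF HB ub] unfolding P2_def by auto
  qed
  have P2w1: "P2 w1" using w1 unfolding P2_def by auto
  obtain w2 \<nu> where w2: "P2 w2" "w2 \<noteq> 0\<^sub>v n" "B *\<^sub>v w2 = \<nu> \<cdot>\<^sub>v w2"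
    using eigvec_sub[OF B P2c P2B P2m P2s P2w1 w1(2)] by blast
  have w2c: "w2 \<in> carrier_vec n" using w2 P2c by auto
  define s where "s = (\<Sum>i<n. (cmod (w2 $ i))^2)"
  have ws: "w2 \<bullet>c w2 = of_real s" unfolding s_def by (rule self_ip[OF w2c])
  have "s > 0"
  proof -
    have "w2 \<bullet>c w2 \<noteq> 0" using w2c w2(2) by simp
    hence "s \<noteq> 0" using ws by auto
    moreover have "s \<ge> 0" unfolding s_def by (intro sum_nonneg) auto
    ultimately show ?thesis by simp
  qed
  define c where "c = complex_of_real (1 / sqrt s)"
  define x where "x = c \<cdot>\<^sub>v w2"
  have xc: "x \<in> carrier_vec n" using w2c x_def by simp
  have P2x: "P2 x" unfolding x_def by (rule P2s[OF w2(1)])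
  have "x \<bullet>c x = c * cnj c * (w2 \<bullet>c w2)"
    unfolding x_def using w2c by (simp add: cip_smult_left[of _ n] cip_smult_right[of _ n])
  also have "\<dots> = 1" using \<open>s > 0\<close> unfolding ws c_def
    by (simp add: of_real_mult[symmetric] del: of_real_mult)
  finally have xx: "x \<bullet>c x = 1" .
  have Bx: "B *\<^sub>v x = \<nu> \<cdot>\<^sub>v x"
    unfolding x_def using w2(3) by (simp add: mv_smult[OF B w2c] smult_comm_vec)
  show ?thesis using xc xx P2x Bx unfolding P2_def P1_def by blast
qed


(* ---- W6 ---- *)
definition onb :: "nat \<Rightarrow> (nat \<Rightarrow> complex vec) \<Rightarrow> bool" where
  "onb n u \<longleftrightarrow> (\<forall>i<n. u i \<in> carrier_vec n) \<and> (\<forall>i<n. \<forall>j<n. u i \<bullet>c u j = (if i = j then 1 else 0))"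

lemma joint_induct:
  assumes HA: "hermitian_mat n A" and HB: "hermitian_mat n B" and AB: "A * B = B * A"
  shows "k \<le> n \<Longrightarrow> \<exists>u \<alpha> \<beta>. (\<forall>i<k. u i \<in> carrier_vec n) \<and> (\<forall>i<k. \<forall>j<k. u i \<bullet>c u j = (if i = j then 1 else 0))
     \<and> (\<forall>i<k. A *\<^sub>v u i = \<alpha> i \<cdot>\<^sub>v u i \<and> B *\<^sub>v u i = \<beta> i \<cdot>\<^sub>v u i)"
proof (induction k)
  case 0
  then show ?case by auto
next
  case (Suc k)
  then obtain u \<alpha> \<beta> where uc: "\<forall>i<k. u i \<in> carrier_vec n"
    and uo: "\<forall>i<k. \<forall>j<k. u i \<bullet>c u j = (if i = j then 1 else 0)"
    and ue: "\<forall>i<k. A *\<^sub>v u i = \<alpha> i \<cdot>\<^sub>v u i \<and> B *\<^sub>v u i = \<beta> i \<cdot>\<^sub>v u i" by auto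
  have k: "k < n" using Suc by simp
  obtain x \<mu> \<nu> where x: "x \<in> carrier_vec n" "x \<bullet>c x = 1" "\<forall>i<k. x \<bullet>c u i = 0"
     "A *\<^sub>v x = \<mu> \<cdot>\<^sub>v x" "B *\<^sub>v x = \<nu> \<cdot>\<^sub>v x"
    using joint_step[OF HA HB AB k uc] ue by blast
  let ?u = "u(k := x)" and ?a = "\<alpha>(k := \<mu>)" and ?b = "\<beta>(k := \<nu>)"
  have "\<forall>i<Suc k. ?u i \<in> carrier_vec n" using uc x by (auto simp: less_Suc_eq)
  moreover have "\<forall>i<Suc k. \<forall>j<Suc k. ?u i \<bullet>c ?u j = (if i = j then 1 else 0)"
  proof (intro allI impI)
    fix i j assume i: "i < Suc k" and j: "j < Suc k"
    show "?u i \<bullet>c ?u j = (if i = j then 1 else 0)"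
    proof (cases "i = k")
      case True
      then show ?thesis using x j by (cases "j = k") (auto simp: less_Suc_eq)
    next
      case False
      hence ik: "i < k" using i by simp
      show ?thesis
      proof (cases "j = k")
        case True
        have "u i \<bullet>c x = cnj (x \<bullet>c u i)" using cip_sym[of "u i" n x] uc ik x by simp
        then show ?thesis using True False x ik by simp
      next
        case False
        then show ?thesis using uo ik j \<open>i \<noteq> k\<close> by (simp add: less_Suc_eq)
      qed
    qed
  qed
  moreover have "\<forall>i<Suc k. A *\<^sub>v ?u i = ?a i \<cdot>\<^sub>v ?u i \<and> B *\<^sub>v ?u i = ?b i \<cdot>\<^sub>v ?u i"
    using ue x by (auto simp: less_Suc_eq)
  ultimately show ?case by blast
qed

lemma herm_eig_real:
  assumes H: "hermitian_mat n H" and u: "u \<in> carrier_vec n" and uu: "u \<bullet>c u = 1"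
    and e: "H *\<^sub>v u = \<alpha> \<cdot>\<^sub>v u"
  shows "complex_of_real (Re \<alpha>) = \<alpha>"
proof -
  have "(H *\<^sub>v u) \<bullet>c u = u \<bullet>c (H *\<^sub>v u)" by (rule herm_ip[OF H u u])
  hence "\<alpha> * (u \<bullet>c u) = cnj \<alpha> * (u \<bullet>c u)" unfolding e using u
    by (simp add: cip_smult_left[of _ n] cip_smult_right[of _ n])
  hence "\<alpha> = cnj \<alpha>" using uu by simp
  thus ?thesis by (metis Reals_cnj_iff complex_is_Real_iff of_real_Re)
qed

lemma joint_diag:
  assumes HA: "hermitian_mat n A" and HB: "hermitian_mat n B" and AB: "A * B = B * A"
  shows "\<exists>u a b. onb n u \<and> (\<forall>i<n. A *\<^sub>v u i = complex_of_real (a i) \<cdot>\<^sub>v u i \<and> B *\<^sub>v u i = complex_of_real (b i) \<cdot>\<^sub>v u i)"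
proof -
  obtain u \<alpha> \<beta> where uc: "\<forall>i<n. u i \<in> carrier_vec n"
    and uo: "\<forall>i<n. \<forall>j<n. u i \<bullet>c u j = (if i = j then 1 else 0)"
    and ue: "\<forall>i<n. A *\<^sub>v u i = \<alpha> i \<cdot>\<^sub>v u i \<and> B *\<^sub>v u i = \<beta> i \<cdot>\<^sub>v u i"
    using joint_induct[OF HA HB AB, of n] by auto
  have ra: "complex_of_real (Re (\<alpha> i)) = \<alpha> i" if "i < n" for i
    using herm_eig_real[OF HA, of "u i"] uc uo ue that by auto
  have rb: "complex_of_real (Re (\<beta> i)) = \<beta> i" if "i < n" for i
    using herm_eig_real[OF HB, of "u i"] uc uo ue that by auto
  show ?thesis
    by (rule exI[of _ u], rule exI[of _ "\<lambda>i. Re (\<alpha> i)"], rule exI[of _ "\<lambda>i. Re (\<beta> i)"])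
       (use uc uo ue ra rb in \<open>auto simp: onb_def\<close>)
qed

definition Umat :: "nat \<Rightarrow> (nat \<Rightarrow> complex vec) \<Rightarrow> complex mat" where
  "Umat n u = mat n n (\<lambda>(r,i). u i $ r)"

lemma Umat_carrier[simp]: "Umat n u \<in> carrier_mat n n" by (simp add: Umat_def)
lemma Umat_dims[simp]: "dim_row (Umat n u) = n" "dim_col (Umat n u) = n" by (auto simp: Umat_def)
lemma Umat_index[simp]: "r < n \<Longrightarrow> i < n \<Longrightarrow> Umat n u $$ (r,i) = u i $ r" by (simp add: Umat_def)

lemma Umat_UU: assumes "onb n u" shows "mat_adjoint (Umat n u) * Umat n u = 1\<^sub>m n"
proof (rule eq_matI)
  fix i j assume "i < dim_row (1\<^sub>m n :: complex mat)" "j < dim_col (1\<^sub>m n :: complex mat)"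
  hence ij: "i < n" "j < n" by auto
  have "(mat_adjoint (Umat n u) * Umat n u) $$ (i,j) = (\<Sum>r<n. cnj (u i $ r) * u j $ r)"
    using ij by (simp add: scalar_prod_def atLeast0LessThan)
  also have "\<dots> = u j \<bullet>c u i" using assms ij unfolding onb_def
    by (simp add: cscalar_def'[of _ n] mult.commute)
  also have "\<dots> = 1\<^sub>m n $$ (i,j)" using assms ij unfolding onb_def by auto
  finally show "(mat_adjoint (Umat n u) * Umat n u) $$ (i,j) = 1\<^sub>m n $$ (i,j)" .
qed auto

lemma Umat_UU': assumes "onb n u" shows "Umat n u * mat_adjoint (Umat n u) = 1\<^sub>m n"
  using mat_mult_left_right_inverse[OF adj_carrier[OF Umat_carrier] Umat_carrier Umat_UU[OF assms]] .

lemma eig_mat: assumes A: "A \<in> carrier_mat n n" and u: "\<forall>i<n. u i \<in> carrier_vec n"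
  and e: "\<forall>i<n. A *\<^sub>v u i = d i \<cdot>\<^sub>v u i"
  shows "A * Umat n u = Umat n u * dmat n d"
proof (rule eq_matI)
  fix r i assume "r < dim_row (Umat n u * dmat n d)" "i < dim_col (Umat n u * dmat n d)"
  hence ri: "r < n" "i < n" by auto
  have "(A * Umat n u) $$ (r,i) = (\<Sum>k<n. A $$ (r,k) * u i $ k)"
    using ri A by (simp add: scalar_prod_def atLeast0LessThan)
  also have "\<dots> = (A *\<^sub>v u i) $ r" using mult_mat_vec_index'[OF A _ ri(1), of "u i"] u ri by simp
  also have "\<dots> = d i * u i $ r"
  proof -
    have ui: "dim_vec (u i) = n" using u ri by auto
    thus ?thesis using e ri by simp
  qed
  also have "\<dots> = (\<Sum>k<n. (if k = i then u k $ r * d k else 0))" using ri by (simp add: sum_delta_nat)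
  also have "\<dots> = (\<Sum>k<n. u k $ r * (if k = i then d k else 0))" by (intro sum.cong) auto
  also have "\<dots> = (Umat n u * dmat n d) $$ (r,i)"
    using ri by (auto simp: scalar_prod_def atLeast0LessThan intro!: sum.cong)
  finally show "(A * Umat n u) $$ (r,i) = (Umat n u * dmat n d) $$ (r,i)" .
qed (use A in auto)

lemma eig_decomp: assumes A: "A \<in> carrier_mat n n" and u: "onb n u"
  and e: "\<forall>i<n. A *\<^sub>v u i = d i \<cdot>\<^sub>v u i"
  shows "A = Umat n u * dmat n d * mat_adjoint (Umat n u)"
proof -
  let ?U = "Umat n u"
  have Uc: "?U \<in> carrier_mat n n" by simp
  have "A = A * (?U * mat_adjoint ?U)" using Umat_UU'[OF u] A by simp
  also have "\<dots> = (A * ?U) * mat_adjoint ?U" using A by (simp add: assoc_mult_mat[of _ n n _ n _ n])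
  also have "\<dots> = ?U * dmat n d * mat_adjoint ?U" using eig_mat[OF A _ e] u unfolding onb_def by simp
  finally show ?thesis .
qed


(* ---- W7 ---- *)
lemma mult_cnj_cmod: "z * cnj z = (complex_of_real (cmod z))^2"
  using complex_norm_square[of z] by simp
lemma mult_cnj_cmod': "cnj z * z = (complex_of_real (cmod z))^2"
  using complex_norm_square[of z] by (simp add: mult.commute)

lemma adj_mv_carrier[simp]: "(U :: complex mat) \<in> carrier_mat n m \<Longrightarrow> w \<in> carrier_vec n \<Longrightarrow> mat_adjoint U *\<^sub>v w \<in> carrier_vec m"
  by (rule mult_mat_vec_carrier[OF adj_carrier])

lemma sum_mset_list: "(\<Sum>x\<in>#mset xs. f x) = (\<Sum>x\<leftarrow>xs. (f x :: real))"
  by (induction xs) auto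

lemma sum_list_map_upt: "(\<Sum>i\<leftarrow>[0..<n]. f i) = (\<Sum>i<n. f i)"
  by (induction n) auto

lemma mat_trace_comm: assumes A: "(A :: complex mat) \<in> carrier_mat n m" and B: "B \<in> carrier_mat m n"
  shows "mat_trace (A * B) = mat_trace (B * A)"
proof -
  have "mat_trace (A * B) = (\<Sum>i<n. \<Sum>k<m. A $$ (i,k) * B $$ (k,i))"
    unfolding mat_trace_def using A B by (simp add: scalar_prod_def atLeast0LessThan)
  also have "\<dots> = (\<Sum>k<m. \<Sum>i<n. B $$ (k,i) * A $$ (i,k))"
    by (subst sum.swap) (simp add: mult.commute)
  also have "\<dots> = mat_trace (B * A)"
    unfolding mat_trace_def using A B by (simp add: scalar_prod_def atLeast0LessThan)
  finally show ?thesis .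
qed

lemma mat_trace_dmat: "mat_trace (dmat n d) = (\<Sum>i<n. d i)"
  by (simp add: mat_trace_def)

lemma mat_trace_minus: "A \<in> carrier_mat n n \<Longrightarrow> B \<in> carrier_mat n n \<Longrightarrow> mat_trace (A - B) = mat_trace A - mat_trace (B :: complex mat)"
  by (simp add: mat_trace_def sum_subtractf)

lemma mat_trace_plus: "A \<in> carrier_mat n n \<Longrightarrow> B \<in> carrier_mat n n \<Longrightarrow> mat_trace (A + B) = mat_trace A + mat_trace (B :: complex mat)"
  by (simp add: mat_trace_def sum.distrib)

lemma trace_conj: assumes U: "(U :: complex mat) \<in> carrier_mat n n" and UU: "mat_adjoint U * U = 1\<^sub>m n"
  shows "mat_trace (U * dmat n d * mat_adjoint U) = (\<Sum>i<n. d i)"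
proof -
  have "mat_trace (U * dmat n d * mat_adjoint U) = mat_trace (mat_adjoint U * (U * dmat n d))"
    by (rule mat_trace_comm[of _ n n]) (use U in auto)
  also have "mat_adjoint U * (U * dmat n d) = (mat_adjoint U * U) * dmat n d"
    using U by (simp add: assoc_mult_mat[of _ n n _ n _ n])
  also have "\<dots> = dmat n d" using UU by simp
  finally show ?thesis by (simp add: mat_trace_dmat)
qed

lemma conj_mult: assumes U: "(U :: complex mat) \<in> carrier_mat n n" and UU: "mat_adjoint U * U = 1\<^sub>m n"
  and X: "X \<in> carrier_mat n n" and Y: "Y \<in> carrier_mat n n"
  shows "(U * X * mat_adjoint U) * (U * Y * mat_adjoint U) = U * (X * Y) * mat_adjoint U"
proof -
  have Ua: "mat_adjoint U \<in> carrier_mat n n" using U by simp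
  have cancel: "mat_adjoint U * (U * Z) = Z" if Z: "Z \<in> carrier_mat n n" for Z
  proof -
    have "mat_adjoint U * (U * Z) = (mat_adjoint U * U) * Z" using U Z by (simp add: assoc_mult_mat[of _ n n _ n _ n])
    thus ?thesis using UU Z by simp
  qed
  have YU: "Y * mat_adjoint U \<in> carrier_mat n n" using Y Ua by simp
  show ?thesis
    using U Ua X Y YU by (simp add: assoc_mult_mat[of _ n n _ n _ n] cancel)
qed

lemma adj_conj: assumes U: "(U :: complex mat) \<in> carrier_mat n n" and X: "X \<in> carrier_mat n n"
  shows "mat_adjoint (U * X * mat_adjoint U) = U * mat_adjoint X * mat_adjoint U"
proof -
  have "mat_adjoint (U * X * mat_adjoint U) = mat_adjoint (mat_adjoint U) * mat_adjoint (U * X)"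
    by (rule adj_mult[of _ n n _ n]) (use U X in auto)
  also have "\<dots> = U * (mat_adjoint X * mat_adjoint U)" using adj_mult[OF U X] by simp
  also have "\<dots> = U * mat_adjoint X * mat_adjoint U" using U X by (simp add: assoc_mult_mat[of _ n n _ n _ n])
  finally show ?thesis .
qed

lemma proots_lin_prod: "proots (\<Prod>a\<leftarrow>xs. [:- a, 1:]) = mset (xs :: complex list)"
proof (induction xs)
  case Nil then show ?case by simp
next
  case (Cons x xs)
  have nz: "(\<Prod>a\<leftarrow>xs. [:- a, 1:]) \<noteq> (0 :: complex poly)"
    by (auto simp: prod_list_zero_iff)
  have pe: "(\<Prod>a\<leftarrow>x # xs. [:- a, 1:]) = [:- x, 1:] * (\<Prod>a\<leftarrow>xs. [:- a, 1:])" by simp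
  have "proots (\<Prod>a\<leftarrow>x # xs. [:- a, 1:]) = proots [:- x, 1:] + proots (\<Prod>a\<leftarrow>xs. [:- a, 1:])"
    unfolding pe by (rule proots_mult) (use nz in auto)
  also have "proots [:- x, 1:] = {#x#}" using proots_linear_factor[of "-x"] by simp
  finally show ?case using Cons by simp
qed

lemma char_poly_dmat: "char_poly (dmat n e) = (\<Prod>a\<leftarrow>map e [0..<n]. [:- a, 1:])"
proof -
  have ut: "upper_triangular (dmat n e)" unfolding upper_triangular_def by auto
  have "diag_mat (dmat n e) = map e [0..<n]" unfolding diag_mat_def by auto
  thus ?thesis using char_poly_upper_triangular[OF dmat_carrier ut] by simp
qed

lemma char_poly_conj: assumes U: "(U :: complex mat) \<in> carrier_mat n n" and UU: "mat_adjoint U * U = 1\<^sub>m n"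
  and UU': "U * mat_adjoint U = 1\<^sub>m n" and X: "X \<in> carrier_mat n n"
  shows "char_poly (U * X * mat_adjoint U) = char_poly X"
proof (rule char_poly_similar)
  show "similar_mat (U * X * mat_adjoint U) X"
    unfolding similar_mat_def similar_mat_wit_def Let_def
    by (rule exI[of _ U], rule exI[of _ "mat_adjoint U"]) (use U X UU UU' in auto)
qed

lemma trace_norm_conj:
  assumes U: "(U :: complex mat) \<in> carrier_mat n n" and UU: "mat_adjoint U * U = 1\<^sub>m n" and UU': "U * mat_adjoint U = 1\<^sub>m n"
  shows "trace_norm (U * dmat n d * mat_adjoint U) = (\<Sum>i<n. cmod (d i))"
proof -
  let ?M = "U * dmat n d * mat_adjoint U"
  define E where "E = (\<lambda>i. (complex_of_real (cmod (d i)))^2)"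
  have "mat_adjoint ?M = U * dmat n (\<lambda>i. cnj (d i)) * mat_adjoint U"
    using adj_conj[OF U dmat_carrier] by (simp add: adj_dmat)
  hence "mat_adjoint ?M * ?M = U * (dmat n (\<lambda>i. cnj (d i)) * dmat n d) * mat_adjoint U"
    using conj_mult[OF U UU] by simp
  also have "dmat n (\<lambda>i. cnj (d i)) * dmat n d = dmat n E"
    by (simp add: dmat_mult mult_cnj_cmod' E_def)
  finally have e: "mat_adjoint ?M * ?M = U * dmat n E * mat_adjoint U" .
  have "char_poly (mat_adjoint ?M * ?M) = (\<Prod>a\<leftarrow>map E [0..<n]. [:- a, 1:])"
    unfolding e char_poly_conj[OF U UU UU' dmat_carrier] char_poly_dmat ..
  hence "proots (char_poly (mat_adjoint ?M * ?M)) = mset (map E [0..<n])"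
    by (simp only: proots_lin_prod)
  hence "trace_norm ?M = (\<Sum>x\<in>#mset (map E [0..<n]). sqrt (Re x))"
    unfolding trace_norm_def by simp
  also have "\<dots> = (\<Sum>i\<leftarrow>[0..<n]. sqrt (Re (E i)))"
    by (simp only: sum_mset_list map_map comp_def)
  also have "\<dots> = (\<Sum>i<n. sqrt (Re (E i)))" by (rule sum_list_map_upt)
  also have "\<dots> = (\<Sum>i<n. cmod (d i))"
    by (intro sum.cong refl) (simp add: E_def power2_eq_square)
  finally show ?thesis .
qed

lemma quad_form: assumes U: "(U :: complex mat) \<in> carrier_mat n n" and w: "w \<in> carrier_vec n"
  shows "((U * dmat n d * mat_adjoint U) *\<^sub>v w) \<bullet>c w = (\<Sum>i<n. d i * complex_of_real ((cmod ((mat_adjoint U *\<^sub>v w) $ i))^2))"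
proof -
  let ?b = "mat_adjoint U *\<^sub>v w"
  have b: "?b \<in> carrier_vec n" using U w by simp
  have db: "dmat n d *\<^sub>v ?b \<in> carrier_vec n" by (rule mult_mat_vec_carrier[OF dmat_carrier b])
  have "(U * dmat n d * mat_adjoint U) *\<^sub>v w = U *\<^sub>v (dmat n d *\<^sub>v ?b)"
    using U w by (simp add: assoc_mult_mat_vec[of _ n n _ n])
  hence "((U * dmat n d * mat_adjoint U) *\<^sub>v w) \<bullet>c w = (U *\<^sub>v (dmat n d *\<^sub>v ?b)) \<bullet>c w" by simp
  also have "\<dots> = (dmat n d *\<^sub>v ?b) \<bullet>c ?b"
    using adj_ip[OF U db w] by simp
  also have "\<dots> = (\<Sum>i<n. (dmat n d *\<^sub>v ?b) $ i * cnj (?b $ i))"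
    by (rule cscalar_def'[OF db b])
  also have "\<dots> = (\<Sum>i<n. d i * (?b $ i * cnj (?b $ i)))"
  proof (intro sum.cong refl)
    fix i assume i: "i \<in> {..<n}"
    have "(dmat n d *\<^sub>v ?b) $ i = (\<Sum>k<n. dmat n d $$ (i,k) * ?b $ k)"
      using mult_mat_vec_index'[OF dmat_carrier b] i by simp
    also have "\<dots> = (\<Sum>k<n. if k = i then d i * ?b $ k else 0)" using i by (intro sum.cong) auto
    also have "\<dots> = d i * ?b $ i" using i by (simp add: sum_delta_nat)
    finally show "(dmat n d *\<^sub>v ?b) $ i * cnj (?b $ i) = d i * (?b $ i * cnj (?b $ i))" by simp
  qed
  also have "\<dots> = (\<Sum>i<n. d i * complex_of_real ((cmod (?b $ i))^2))"
    by (simp add: mult_cnj_cmod)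
  finally show ?thesis .
qed


(* ---- W8 ---- *)
lemma mult_nn[simp]: "A \<in> carrier_mat n n \<Longrightarrow> B \<in> carrier_mat n n \<Longrightarrow> A * B \<in> carrier_mat n n"
  by (rule mult_carrier_mat)
lemma mv_nn[simp]: "A \<in> carrier_mat n n \<Longrightarrow> w \<in> carrier_vec n \<Longrightarrow> A *\<^sub>v w \<in> carrier_vec n"
  by (rule mult_mat_vec_carrier)
lemma Umat_adj_carrier[simp]: "mat_adjoint (Umat n u) \<in> carrier_mat n n"
  by simp

lemma weyl:
  assumes u: "onb n u" and v: "onb n v"
    and xd: "\<And>i j. i \<le> j \<Longrightarrow> j < n \<Longrightarrow> x j \<le> (x i :: real)"
    and zd: "\<And>i j. i \<le> j \<Longrightarrow> j < n \<Longrightarrow> z j \<le> (z i :: real)"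
    and le: "\<And>w. w \<in> carrier_vec n \<Longrightarrow>
        Re (((Umat n u * dmat n (\<lambda>i. complex_of_real (x i)) * mat_adjoint (Umat n u)) *\<^sub>v w) \<bullet>c w)
     \<le> Re (((Umat n v * dmat n (\<lambda>i. complex_of_real (z i)) * mat_adjoint (Umat n v)) *\<^sub>v w) \<bullet>c w)"
    and k: "k < n"
  shows "x k \<le> z k"
proof -
  let ?U = "Umat n u" and ?V = "Umat n v"
  have Uc: "?U \<in> carrier_mat n n" and Vc: "?V \<in> carrier_mat n n" by auto
  have UU: "mat_adjoint ?U * ?U = 1\<^sub>m n" by (rule Umat_UU[OF u])
  have VV': "?V * mat_adjoint ?V = 1\<^sub>m n" by (rule Umat_UU'[OF v])
  define G where "G = mat_adjoint ?V * ?U"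
  have Gc: "G \<in> carrier_mat n n" unfolding G_def by simp
  define M where "M = mat k (Suc k) (\<lambda>(r,c). G $$ (r,c))"
  have Mc: "M \<in> carrier_mat k (Suc k)" by (simp add: M_def)
  obtain \<gamma> where g: "\<gamma> \<in> carrier_vec (Suc k)" "\<gamma> \<noteq> 0\<^sub>v (Suc k)" "M *\<^sub>v \<gamma> = 0\<^sub>v k"
    using underdet[OF Mc] by auto
  define \<alpha> where "\<alpha> = vec n (\<lambda>i. if i \<le> k then \<gamma> $ i else 0)"
  have ac: "\<alpha> \<in> carrier_vec n" by (simp add: \<alpha>_def)
  define w where "w = ?U *\<^sub>v \<alpha>"
  have wc: "w \<in> carrier_vec n" unfolding w_def using Uc ac by simp
  define \<beta> where "\<beta> = mat_adjoint ?V *\<^sub>v w"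
  have bc: "\<beta> \<in> carrier_vec n" unfolding \<beta>_def using Vc wc by simp
  have bG: "\<beta> = G *\<^sub>v \<alpha>" unfolding \<beta>_def w_def G_def using Uc Vc ac
    by (simp add: assoc_mult_mat_vec[of _ n n _ n])
  have b0: "\<beta> $ r = 0" if r: "r < k" for r
  proof -
    have rn: "r < n" using r k by simp
    have "\<beta> $ r = (\<Sum>c<n. G $$ (r,c) * \<alpha> $ c)" unfolding bG by (rule mult_mat_vec_index'[OF Gc ac rn])
    also have "\<dots> = (\<Sum>c<Suc k. G $$ (r,c) * \<alpha> $ c)"
      by (rule sum.mono_neutral_right) (use k in \<open>auto simp: \<alpha>_def\<close>)
    also have "\<dots> = (\<Sum>c<Suc k. M $$ (r,c) * \<gamma> $ c)"
      by (intro sum.cong refl) (use k r in \<open>auto simp: \<alpha>_def M_def\<close>)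
    also have "\<dots> = (M *\<^sub>v \<gamma>) $ r" by (rule mult_mat_vec_index'[OF Mc g(1) r, symmetric])
    also have "\<dots> = 0" using r by (simp add: g(3))
    finally show ?thesis .
  qed
  have a0: "\<alpha> $ i = 0" if "k < i" "i < n" for i using that by (simp add: \<alpha>_def)
  define S where "S = (\<Sum>i<n. (cmod (\<alpha> $ i))^2)"
  define T where "T = (\<Sum>i<n. (cmod (\<beta> $ i))^2)"
  have "complex_of_real S = \<alpha> \<bullet>c \<alpha>" unfolding S_def by (rule self_ip[OF ac, symmetric])
  also have "\<dots> = w \<bullet>c w" unfolding w_def by (rule unitary_ip[OF Uc UU ac ac, symmetric])
  also have "\<dots> = w \<bullet>c (?V *\<^sub>v \<beta>)" unfolding \<beta>_def using Vc wc VV'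
    by (simp add: assoc_mult_mat_vec[of _ n n _ n, symmetric])
  also have "\<dots> = \<beta> \<bullet>c \<beta>" using adj_ip[OF adj_carrier[OF Vc] wc bc] by (simp only: \<beta>_def[symmetric] adj_adj)
  also have "\<dots> = complex_of_real T" unfolding T_def by (rule self_ip[OF bc])
  finally have ST: "S = T" by simp
  have "\<exists>j<Suc k. \<gamma> $ j \<noteq> 0"
  proof (rule ccontr)
    assume "\<not> ?thesis"
    hence "\<gamma> = 0\<^sub>v (Suc k)" using g(1) by (intro eq_vecI) auto
    with g(2) show False by simp
  qed
  then obtain j where j: "j < Suc k" "\<gamma> $ j \<noteq> 0" by auto
  have "S > 0"
  proof -
    have "(cmod (\<alpha> $ j))^2 > 0" using j k by (simp add: \<alpha>_def)
    moreover have "(cmod (\<alpha> $ j))^2 \<le> S" unfolding S_def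
      by (rule member_le_sum) (use j k in auto)
    ultimately show ?thesis by linarith
  qed
  have aU: "mat_adjoint ?U *\<^sub>v w = \<alpha>" unfolding w_def using Uc ac UU
    by (simp add: assoc_mult_mat_vec[of _ n n _ n, symmetric])
  have "x k * S = (\<Sum>i<n. x k * (cmod (\<alpha> $ i))^2)" unfolding S_def by (simp add: sum_distrib_left)
  also have "\<dots> \<le> (\<Sum>i<n. x i * (cmod (\<alpha> $ i))^2)"
  proof (rule sum_mono)
    fix i assume i: "i \<in> {..<n}"
    show "x k * (cmod (\<alpha> $ i))^2 \<le> x i * (cmod (\<alpha> $ i))^2"
    proof (cases "i \<le> k")
      case True then show ?thesis using xd[of i k] k by (intro mult_right_mono) auto
    next
      case False then show ?thesis using a0 i by simp
    qed
  qed
  also have "\<dots> = Re ((( ?U * dmat n (\<lambda>i. complex_of_real (x i)) * mat_adjoint ?U) *\<^sub>v w) \<bullet>c w)"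
    unfolding quad_form[OF Uc wc] aU by (simp add: Re_sum)
  also have "\<dots> \<le> Re ((( ?V * dmat n (\<lambda>i. complex_of_real (z i)) * mat_adjoint ?V) *\<^sub>v w) \<bullet>c w)"
    by (rule le[OF wc])
  also have "\<dots> = (\<Sum>i<n. z i * (cmod (\<beta> $ i))^2)"
    unfolding quad_form[OF Vc wc] \<beta>_def[symmetric] by (simp add: Re_sum)
  also have "\<dots> \<le> (\<Sum>i<n. z k * (cmod (\<beta> $ i))^2)"
  proof (rule sum_mono)
    fix i assume i: "i \<in> {..<n}"
    show "z i * (cmod (\<beta> $ i))^2 \<le> z k * (cmod (\<beta> $ i))^2"
    proof (cases "k \<le> i")
      case True then show ?thesis using zd[of k i] i by (intro mult_right_mono) auto
    next
      case False then show ?thesis using b0 by simp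
    qed
  qed
  also have "\<dots> = z k * S" unfolding ST T_def by (simp add: sum_distrib_left)
  finally show ?thesis using \<open>S > 0\<close> by simp
qed


(* ---- W9 ---- *)
lemma sort_perm: "\<exists>\<pi>. bij_betw \<pi> {..<(n::nat)} {..<n} \<and> (\<forall>i j. i \<le> j \<longrightarrow> j < n \<longrightarrow> key (\<pi> j) \<le> (key (\<pi> i) :: real))"
proof -
  define xs where "xs = map key [0..<n]"
  define ys where "ys = rev (sort xs)"
  have lx: "length xs = n" and ly: "length ys = n" by (auto simp: xs_def ys_def)
  have "mset ys = mset xs" by (simp add: ys_def)
  from permutation_Ex_bij[OF this] obtain f where f: "bij_betw f {..<length ys} {..<length xs}"
    "\<forall>i<length ys. ys ! i = xs ! f i" by blast
  have fb: "bij_betw f {..<n} {..<n}" using f(1) lx ly by simp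
  have kf: "key (f i) = ys ! i" if "i < n" for i
  proof -
    have "f i < n" using fb that by (auto dest: bij_betw_apply)
    thus ?thesis using f(2) that ly by (simp add: xs_def)
  qed
  have srt: "sorted (sort xs)" by simp
  have "key (f j) \<le> key (f i)" if ij: "i \<le> j" "j < n" for i j
  proof -
    have "ys ! j = sort xs ! (n - Suc j)" using ij ly by (simp add: ys_def rev_nth xs_def)
    moreover have "ys ! i = sort xs ! (n - Suc i)" using ij ly by (simp add: ys_def rev_nth xs_def)
    moreover have "sort xs ! (n - Suc j) \<le> sort xs ! (n - Suc i)"
      by (rule sorted_nth_mono[OF srt]) (use ij lx in auto)
    ultimately show ?thesis using kf ij by simp
  qed
  thus ?thesis using fb by blast
qed

lemma onb_perm: assumes u: "onb n u" and p: "bij_betw \<pi> {..<n} {..<n}"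
  shows "onb n (u \<circ> \<pi>)"
proof -
  have pi: "\<pi> i < n" if "i < n" for i using p that by (auto dest: bij_betw_apply)
  have inj: "\<pi> i = \<pi> j \<longleftrightarrow> i = j" if "i < n" "j < n" for i j
    using p that unfolding bij_betw_def inj_on_def by auto
  show ?thesis using u pi inj unfolding onb_def by auto
qed

lemma conj_minus: assumes U: "(U :: complex mat) \<in> carrier_mat n n" and X: "X \<in> carrier_mat n n" and Y: "Y \<in> carrier_mat n n"
  shows "U * X * mat_adjoint U - U * Y * mat_adjoint U = U * (X - Y) * mat_adjoint U"
proof -
  have "U * (X - Y) = U * X - U * Y" by (rule mult_minus_distrib_mat[OF U X Y])
  hence "U * (X - Y) * mat_adjoint U = (U * X - U * Y) * mat_adjoint U" by simp
  also have "\<dots> = U * X * mat_adjoint U - U * Y * mat_adjoint U"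
    by (rule minus_mult_distrib_mat) (use U X Y in auto)
  finally show ?thesis by simp
qed

lemma conj_plus: assumes U: "(U :: complex mat) \<in> carrier_mat n n" and X: "X \<in> carrier_mat n n" and Y: "Y \<in> carrier_mat n n"
  shows "U * X * mat_adjoint U + U * Y * mat_adjoint U = U * (X + Y) * mat_adjoint U"
proof -
  have "U * (X + Y) = U * X + U * Y" by (rule mult_add_distrib_mat[OF U X Y])
  hence "U * (X + Y) * mat_adjoint U = (U * X + U * Y) * mat_adjoint U" by simp
  also have "\<dots> = U * X * mat_adjoint U + U * Y * mat_adjoint U"
    by (rule add_mult_distrib_mat) (use U X Y in auto)
  finally show ?thesis by simp
qed

lemma channel_conj: assumes E: "(E :: complex mat) \<in> carrier_mat n n" and F: "F \<in> carrier_mat n n"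
  and FF: "mat_adjoint F * F = 1\<^sub>m n" and X: "X \<in> carrier_mat n n"
  shows "(E * mat_adjoint F) * (F * X * mat_adjoint F) * mat_adjoint (E * mat_adjoint F) = E * X * mat_adjoint E"
proof -
  have Fa: "mat_adjoint F \<in> carrier_mat n n" "mat_adjoint E \<in> carrier_mat n n" using E F by auto
  have adj: "mat_adjoint (E * mat_adjoint F) = F * mat_adjoint E"
    using adj_mult[OF E Fa(1)] by simp
  have cancel: "mat_adjoint F * (F * Z) = Z" if Z: "Z \<in> carrier_mat n n" for Z
  proof -
    have "mat_adjoint F * (F * Z) = (mat_adjoint F * F) * Z" using F Z by (simp add: assoc_mult_mat[of _ n n _ n _ n])
    thus ?thesis using FF Z by simp
  qed
  have c1: "X * (mat_adjoint F * (F * mat_adjoint E)) = X * mat_adjoint E"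
    using cancel[of "mat_adjoint E"] Fa by simp
  show ?thesis unfolding adj
    using E F Fa X by (simp add: assoc_mult_mat[of _ n n _ n _ n] cancel c1)
qed

lemma shifted_quad: assumes U: "(U :: complex mat) \<in> carrier_mat n n" and w: "w \<in> carrier_vec n"
  shows "Re (((U * dmat n (\<lambda>i. complex_of_real (p i + K * q i)) * mat_adjoint U) *\<^sub>v w) \<bullet>c w)
     = Re (((U * dmat n (\<lambda>i. complex_of_real (p i)) * mat_adjoint U) *\<^sub>v w) \<bullet>c w)
       + K * Re (((U * dmat n (\<lambda>i. complex_of_real (q i)) * mat_adjoint U) *\<^sub>v w) \<bullet>c w)"
  unfolding quad_form[OF U w] by (simp add: Re_sum sum.distrib sum_distrib_left algebra_simps)


(* ---- W10 ---- *)
lemma decomp_perm: assumes u0: "onb n u0" and p: "bij_betw p {..<n} {..<n}" and A: "A \<in> carrier_mat n n"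
  and e: "\<forall>i<n. A *\<^sub>v u0 i = complex_of_real (x0 i) \<cdot>\<^sub>v u0 i"
  shows "A = Umat n (u0 \<circ> p) * dmat n (\<lambda>i. complex_of_real (x0 (p i))) * mat_adjoint (Umat n (u0 \<circ> p))"
proof (rule eig_decomp[OF A onb_perm[OF u0 p]])
  have pi: "p i < n" if "i < n" for i using p that by (auto dest: bij_betw_apply)
  show "\<forall>i<n. A *\<^sub>v (u0 \<circ> p) i = complex_of_real (x0 (p i)) \<cdot>\<^sub>v (u0 \<circ> p) i" using e pi by auto
qed

lemma trace_real: assumes u: "onb n u"
  shows "mat_trace (Umat n u * dmat n (\<lambda>i. complex_of_real (x i)) * mat_adjoint (Umat n u)) = complex_of_real (\<Sum>i<n. x i)"
  using trace_conj[OF Umat_carrier Umat_UU[OF u]] by simp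

lemma trace_norm_real: assumes u: "onb n u"
  shows "trace_norm (Umat n u * dmat n (\<lambda>i. complex_of_real (x i)) * mat_adjoint (Umat n u)) = (\<Sum>i<n. \<bar>x i\<bar>)"
  using trace_norm_conj[OF Umat_carrier Umat_UU[OF u] Umat_UU'[OF u]] by simp

lemma quad_real: assumes u: "onb n u" and w: "w \<in> carrier_vec n"
  shows "Re (((Umat n u * dmat n (\<lambda>i. complex_of_real (x i)) * mat_adjoint (Umat n u)) *\<^sub>v w) \<bullet>c w)
    = (\<Sum>i<n. x i * (cmod ((mat_adjoint (Umat n u) *\<^sub>v w) $ i))^2)"
  unfolding quad_form[OF Umat_carrier w] by (simp add: Re_sum)

lemma herm_conj_real: assumes u: "onb n u"
  shows "hermitian_mat n (Umat n u * dmat n (\<lambda>i. complex_of_real (x i)) * mat_adjoint (Umat n u))"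
  unfolding hermitian_mat_def using adj_conj[OF Umat_carrier dmat_carrier, of n u]
  by (simp add: adj_dmat)

lemma quad_plus: assumes A: "(A :: complex mat) \<in> carrier_mat n n" and B: "B \<in> carrier_mat n n" and w: "w \<in> carrier_vec n"
  shows "((A + B) *\<^sub>v w) \<bullet>c w = (A *\<^sub>v w) \<bullet>c w + (B *\<^sub>v w) \<bullet>c w"
proof -
  have "(A + B) *\<^sub>v w = A *\<^sub>v w + B *\<^sub>v w" by (rule add_mult_distrib_mat_vec[OF A B w])
  thus ?thesis using A B w by (simp add: add_scalar_prod_distrib[of _ n])
qed

lemma quad_minus: assumes A: "(A :: complex mat) \<in> carrier_mat n n" and B: "B \<in> carrier_mat n n" and w: "w \<in> carrier_vec n"
  shows "((A - B) *\<^sub>v w) \<bullet>c w = (A *\<^sub>v w) \<bullet>c w - (B *\<^sub>v w) \<bullet>c w"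
proof -
  have "(A - B) *\<^sub>v w = A *\<^sub>v w - B *\<^sub>v w" by (rule minus_mult_distrib_mat_vec[OF A B w])
  thus ?thesis using A B w by (simp add: minus_scalar_prod_distrib[of _ n])
qed

lemma commute_conj: assumes u: "onb n u"
  shows "(Umat n u * dmat n x * mat_adjoint (Umat n u)) * (Umat n u * dmat n y * mat_adjoint (Umat n u))
       = (Umat n u * dmat n y * mat_adjoint (Umat n u)) * (Umat n u * dmat n x * mat_adjoint (Umat n u))"
  unfolding conj_mult[OF Umat_carrier Umat_UU[OF u] dmat_carrier dmat_carrier] by (simp add: dmat_comm)

lemma density_herm: "density_mat n \<rho> \<Longrightarrow> hermitian_mat n \<rho>"
  by (simp add: density_mat_def psd_mat_def)


(* ---- W11 ---- *)
theorem lemma23: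
  fixes n :: nat and \<rho> \<rho>' \<sigma> :: "complex mat"
  assumes "density_mat n \<rho>" and "density_mat n \<rho>'" and "density_mat n \<sigma>"
    and "\<rho> * \<sigma> = \<sigma> * \<rho>" and "\<rho>' * \<sigma> = \<sigma> * \<rho>'"
  shows "\<exists>U. unitary_mat n U \<and>
    \<rho> * unitary_channel U \<rho>' = unitary_channel U \<rho>' * \<rho> \<and>
    trace_dist \<rho> (unitary_channel U \<rho>') \<le> trace_dist \<rho> \<rho>' \<and>
    unitary_channel U \<rho>' * \<sigma> = \<sigma> * unitary_channel U \<rho>'"
proof -
  have Hr: "hermitian_mat n \<rho>" using assms(1) by (rule density_herm)
  have Hr': "hermitian_mat n \<rho>'" using assms(2) by (rule density_herm)
  have Hs: "hermitian_mat n \<sigma>" using assms(3) by (rule density_herm)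
  have rc: "\<rho> \<in> carrier_mat n n" using Hr herm_carrier by auto
  have rc': "\<rho>' \<in> carrier_mat n n" using Hr' herm_carrier by auto
  have sc: "\<sigma> \<in> carrier_mat n n" using Hs herm_carrier by auto
  obtain e0 a0 s0 where e0: "onb n e0" and ee0: "\<forall>i<n. \<rho> *\<^sub>v e0 i = complex_of_real (a0 i) \<cdot>\<^sub>v e0 i \<and> \<sigma> *\<^sub>v e0 i = complex_of_real (s0 i) \<cdot>\<^sub>v e0 i"
    using joint_diag[OF Hr Hs assms(4)] by blast
  obtain f0 b0 t0 where f0: "onb n f0" and ff0: "\<forall>i<n. \<rho>' *\<^sub>v f0 i = complex_of_real (b0 i) \<cdot>\<^sub>v f0 i \<and> \<sigma> *\<^sub>v f0 i = complex_of_real (t0 i) \<cdot>\<^sub>v f0 i"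
    using joint_diag[OF Hr' Hs assms(5)] by blast
  define C where "C = \<rho> - \<rho>'"
  have Cc: "C \<in> carrier_mat n n" unfolding C_def by (rule minus_carrier_mat[OF rc'])
  have HC: "hermitian_mat n C" unfolding hermitian_mat_def C_def
    using adj_minus[OF rc rc'] Hr Hr' rc rc' Cc[unfolded C_def] unfolding hermitian_mat_def by simp
  have CS: "C * \<sigma> = \<sigma> * C"
  proof -
    have "C * \<sigma> = \<rho> * \<sigma> - \<rho>' * \<sigma>" unfolding C_def by (rule minus_mult_distrib_mat[OF rc rc' sc])
    also have "\<dots> = \<sigma> * \<rho> - \<sigma> * \<rho>'" using assms(4,5) by simp
    also have "\<dots> = \<sigma> * C" unfolding C_def by (rule mult_minus_distrib_mat[OF sc rc rc', symmetric])
    finally show ?thesis .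
  qed
  obtain g c r where g: "onb n g" and gg: "\<forall>i<n. C *\<^sub>v g i = complex_of_real (c i) \<cdot>\<^sub>v g i \<and> \<sigma> *\<^sub>v g i = complex_of_real (r i) \<cdot>\<^sub>v g i"
    using joint_diag[OF HC Hs CS] by blast
  let ?G = "Umat n g"
  have Cdec: "C = ?G * dmat n (\<lambda>i. complex_of_real (c i)) * mat_adjoint ?G"
    by (rule eig_decomp[OF Cc g]) (use gg in auto)
  have sG: "\<sigma> = ?G * dmat n (\<lambda>i. complex_of_real (r i)) * mat_adjoint ?G"
    by (rule eig_decomp[OF sc g]) (use gg in auto)
  define Cm where "Cm = ?G * dmat n (\<lambda>i. complex_of_real (max (- c i) 0)) * mat_adjoint ?G"
  have Cmc: "Cm \<in> carrier_mat n n" unfolding Cm_def by simp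
  have HCm: "hermitian_mat n Cm" unfolding Cm_def by (rule herm_conj_real[OF g])
  have CmS: "Cm * \<sigma> = \<sigma> * Cm" unfolding Cm_def by (subst (1 2) sG, rule commute_conj[OF g])
  define D where "D = \<rho> + Cm"
  have Dc: "D \<in> carrier_mat n n" unfolding D_def using rc Cmc by simp
  have HD: "hermitian_mat n D" unfolding hermitian_mat_def D_def
    using adj_plus[OF rc Cmc] Hr HCm rc Cmc unfolding hermitian_mat_def by simp
  have DS: "D * \<sigma> = \<sigma> * D"
  proof -
    have "D * \<sigma> = \<rho> * \<sigma> + Cm * \<sigma>" unfolding D_def by (rule add_mult_distrib_mat[OF rc Cmc sc])
    also have "\<dots> = \<sigma> * \<rho> + \<sigma> * Cm" using assms(4) CmS by simp
    also have "\<dots> = \<sigma> * D" unfolding D_def by (rule mult_add_distrib_mat[OF sc rc Cmc, symmetric])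
    finally show ?thesis .
  qed
  obtain h0 d0 q0 where h0: "onb n h0" and hh0: "\<forall>i<n. D *\<^sub>v h0 i = complex_of_real (d0 i) \<cdot>\<^sub>v h0 i \<and> \<sigma> *\<^sub>v h0 i = complex_of_real (q0 i) \<cdot>\<^sub>v h0 i"
    using joint_diag[OF HD Hs DS] by blast

  (* constants *)
  define M where "M = (\<Sum>i<n. \<bar>a0 i\<bar>) + (\<Sum>i<n. \<bar>b0 i\<bar>) + (\<Sum>i<n. \<bar>d0 i\<bar>)"
  have M0: "M \<ge> 0" unfolding M_def by (intro add_nonneg_nonneg sum_nonneg) auto
  have Ma: "\<bar>a0 i\<bar> \<le> M" if "i < n" for i
  proof -
    have "\<bar>a0 i\<bar> \<le> (\<Sum>i<n. \<bar>a0 i\<bar>)" by (rule member_le_sum) (use that in auto)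
    moreover have "(\<Sum>i<n. \<bar>b0 i\<bar>) \<ge> 0" "(\<Sum>i<n. \<bar>d0 i\<bar>) \<ge> 0" by (auto intro: sum_nonneg)
    ultimately show ?thesis unfolding M_def by linarith
  qed
  have Mb: "\<bar>b0 i\<bar> \<le> M" if "i < n" for i
  proof -
    have "\<bar>b0 i\<bar> \<le> (\<Sum>i<n. \<bar>b0 i\<bar>)" by (rule member_le_sum) (use that in auto)
    moreover have "(\<Sum>i<n. \<bar>a0 i\<bar>) \<ge> 0" "(\<Sum>i<n. \<bar>d0 i\<bar>) \<ge> 0" by (auto intro: sum_nonneg)
    ultimately show ?thesis unfolding M_def by linarith
  qed
  have Md: "\<bar>d0 i\<bar> \<le> M" if "i < n" for i
  proof -
    have "\<bar>d0 i\<bar> \<le> (\<Sum>i<n. \<bar>d0 i\<bar>)" by (rule member_le_sum) (use that in auto)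
    moreover have "(\<Sum>i<n. \<bar>a0 i\<bar>) \<ge> 0" "(\<Sum>i<n. \<bar>b0 i\<bar>) \<ge> 0" by (auto intro: sum_nonneg)
    ultimately show ?thesis unfolding M_def by linarith
  qed
  define T1 where "T1 i k = (if s0 i \<noteq> q0 k then 2 * M / \<bar>s0 i - q0 k\<bar> else 0)" for i k
  define T2 where "T2 i k = (if t0 i \<noteq> q0 k then 2 * M / \<bar>t0 i - q0 k\<bar> else 0)" for i k
  have T1n: "T1 i k \<ge> 0" for i k unfolding T1_def using M0 by auto
  have T2n: "T2 i k \<ge> 0" for i k unfolding T2_def using M0 by auto
  define K where "K = 1 + (\<Sum>i<n. \<Sum>k<n. T1 i k) + (\<Sum>i<n. \<Sum>k<n. T2 i k)"
  have S1: "T1 i k \<le> (\<Sum>i<n. \<Sum>k<n. T1 i k)" if "i < n" "k < n" for i k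
  proof -
    have "T1 i k \<le> (\<Sum>k<n. T1 i k)" by (rule member_le_sum) (use that T1n in auto)
    also have "\<dots> \<le> (\<Sum>i<n. \<Sum>k<n. T1 i k)" by (rule member_le_sum[of i _ "\<lambda>i. \<Sum>k<n. T1 i k"]) (use that T1n in \<open>auto intro: sum_nonneg\<close>)
    finally show ?thesis .
  qed
  have S2: "T2 i k \<le> (\<Sum>i<n. \<Sum>k<n. T2 i k)" if "i < n" "k < n" for i k
  proof -
    have "T2 i k \<le> (\<Sum>k<n. T2 i k)" by (rule member_le_sum) (use that T2n in auto)
    also have "\<dots> \<le> (\<Sum>i<n. \<Sum>k<n. T2 i k)" by (rule member_le_sum[of i _ "\<lambda>i. \<Sum>k<n. T2 i k"]) (use that T2n in \<open>auto intro: sum_nonneg\<close>)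
    finally show ?thesis .
  qed
  have sum1n: "(\<Sum>i<n. \<Sum>k<n. T1 i k) \<ge> 0" by (intro sum_nonneg) (use T1n in auto)
  have sum2n: "(\<Sum>i<n. \<Sum>k<n. T2 i k) \<ge> 0" by (intro sum_nonneg) (use T2n in auto)
  have K0: "K > 0" unfolding K_def using sum1n sum2n by linarith
  have K1: "2 * M < K * \<bar>s0 i - q0 k\<bar>" if "i < n" "k < n" "s0 i \<noteq> q0 k" for i k
  proof -
    have pos: "\<bar>s0 i - q0 k\<bar> > 0" using that by simp
    have "2 * M / \<bar>s0 i - q0 k\<bar> < K" using S1[OF that(1,2)] that(3) sum2n unfolding K_def T1_def by simp
    thus ?thesis using pos by (simp add: divide_less_eq mult.commute)
  qed
  have K2: "2 * M < K * \<bar>t0 i - q0 k\<bar>" if "i < n" "k < n" "t0 i \<noteq> q0 k" for i k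
  proof -
    have pos: "\<bar>t0 i - q0 k\<bar> > 0" using that by simp
    have "2 * M / \<bar>t0 i - q0 k\<bar> < K" using S2[OF that(1,2)] that(3) sum1n unfolding K_def T2_def by simp
    thus ?thesis using pos by (simp add: divide_less_eq mult.commute)
  qed

  (* sorting *)
  obtain p1 where p1: "bij_betw p1 {..<n} {..<n}" "\<forall>i j. i \<le> j \<longrightarrow> j < n \<longrightarrow> a0 (p1 j) + K * s0 (p1 j) \<le> a0 (p1 i) + K * s0 (p1 i)"
    using sort_perm[of n "\<lambda>i. a0 i + K * s0 i"] by blast
  obtain p2 where p2: "bij_betw p2 {..<n} {..<n}" "\<forall>i j. i \<le> j \<longrightarrow> j < n \<longrightarrow> b0 (p2 j) + K * t0 (p2 j) \<le> b0 (p2 i) + K * t0 (p2 i)"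
    using sort_perm[of n "\<lambda>i. b0 i + K * t0 i"] by blast
  obtain p3 where p3: "bij_betw p3 {..<n} {..<n}" "\<forall>i j. i \<le> j \<longrightarrow> j < n \<longrightarrow> d0 (p3 j) + K * q0 (p3 j) \<le> d0 (p3 i) + K * q0 (p3 i)"
    using sort_perm[of n "\<lambda>i. d0 i + K * q0 i"] by blast
  have p1n: "p1 i < n" if "i < n" for i using p1(1) that by (auto dest: bij_betw_apply)
  have p2n: "p2 i < n" if "i < n" for i using p2(1) that by (auto dest: bij_betw_apply)
  have p3n: "p3 i < n" if "i < n" for i using p3(1) that by (auto dest: bij_betw_apply)
  define e where "e = e0 \<circ> p1"
  define f where "f = f0 \<circ> p2"
  define h where "h = h0 \<circ> p3"
  define a where "a i = a0 (p1 i)" for i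
  define s where "s i = s0 (p1 i)" for i
  define b where "b i = b0 (p2 i)" for i
  define t where "t i = t0 (p2 i)" for i
  define d where "d i = d0 (p3 i)" for i
  define q where "q i = q0 (p3 i)" for i
  have e: "onb n e" unfolding e_def by (rule onb_perm[OF e0 p1(1)])
  have f: "onb n f" unfolding f_def by (rule onb_perm[OF f0 p2(1)])
  have h: "onb n h" unfolding h_def by (rule onb_perm[OF h0 p3(1)])
  let ?E = "Umat n e" and ?F = "Umat n f" and ?H = "Umat n h"
  let ?dg = "\<lambda>x. dmat n (\<lambda>i. complex_of_real (x i))"
  have rE: "\<rho> = ?E * ?dg a * mat_adjoint ?E" unfolding e_def a_def
    by (rule decomp_perm[OF e0 p1(1) rc]) (use ee0 in auto)
  have sE: "\<sigma> = ?E * ?dg s * mat_adjoint ?E" unfolding e_def s_def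
    by (rule decomp_perm[OF e0 p1(1) sc]) (use ee0 in auto)
  have rF: "\<rho>' = ?F * ?dg b * mat_adjoint ?F" unfolding f_def b_def
    by (rule decomp_perm[OF f0 p2(1) rc']) (use ff0 in auto)
  have sF: "\<sigma> = ?F * ?dg t * mat_adjoint ?F" unfolding f_def t_def
    by (rule decomp_perm[OF f0 p2(1) sc]) (use ff0 in auto)
  have DH: "D = ?H * ?dg d * mat_adjoint ?H" unfolding h_def d_def
    by (rule decomp_perm[OF h0 p3(1) Dc]) (use hh0 in auto)
  have sH: "\<sigma> = ?H * ?dg q * mat_adjoint ?H" unfolding h_def q_def
    by (rule decomp_perm[OF h0 p3(1) sc]) (use hh0 in auto)

  (* quadratic forms *)
  have qC: "Re ((C *\<^sub>v w) \<bullet>c w) + Re ((Cm *\<^sub>v w) \<bullet>c w) \<ge> 0" if w: "w \<in> carrier_vec n" for w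
  proof -
    have "Re ((C *\<^sub>v w) \<bullet>c w) + Re ((Cm *\<^sub>v w) \<bullet>c w)
        = (\<Sum>i<n. c i * (cmod ((mat_adjoint ?G *\<^sub>v w) $ i))^2) + (\<Sum>i<n. max (- c i) 0 * (cmod ((mat_adjoint ?G *\<^sub>v w) $ i))^2)"
      unfolding Cm_def by (subst Cdec, simp only: quad_real[OF g w])
    also have "\<dots> = (\<Sum>i<n. (c i + max (- c i) 0) * (cmod ((mat_adjoint ?G *\<^sub>v w) $ i))^2)"
      by (simp add: sum.distrib algebra_simps)
    also have "\<dots> \<ge> 0" by (intro sum_nonneg mult_nonneg_nonneg) auto
    finally show ?thesis .
  qed
  have qCm: "Re ((Cm *\<^sub>v w) \<bullet>c w) \<ge> 0" if w: "w \<in> carrier_vec n" for w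
    unfolding Cm_def quad_real[OF g w] by (intro sum_nonneg mult_nonneg_nonneg) auto
  have qD: "Re ((D *\<^sub>v w) \<bullet>c w) = Re ((\<rho> *\<^sub>v w) \<bullet>c w) + Re ((Cm *\<^sub>v w) \<bullet>c w)" if w: "w \<in> carrier_vec n" for w
    unfolding D_def quad_plus[OF rc Cmc w] by simp
  have qR: "Re ((\<rho> *\<^sub>v w) \<bullet>c w) = Re ((\<rho>' *\<^sub>v w) \<bullet>c w) + Re ((C *\<^sub>v w) \<bullet>c w)" if w: "w \<in> carrier_vec n" for w
    unfolding C_def quad_minus[OF rc rc' w] by simp
  have W1: "a k + K * s k \<le> d k + K * q k" if k: "k < n" for k
  proof (rule weyl[OF e h _ _ _ k])
    show "\<And>i j. i \<le> j \<Longrightarrow> j < n \<Longrightarrow> a j + K * s j \<le> a i + K * s i" using p1(2) unfolding a_def s_def by blast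
    show "\<And>i j. i \<le> j \<Longrightarrow> j < n \<Longrightarrow> d j + K * q j \<le> d i + K * q i" using p3(2) unfolding d_def q_def by blast
    fix w :: "complex vec" assume w: "w \<in> carrier_vec n"
    show "Re (((?E * ?dg (\<lambda>i. a i + K * s i) * mat_adjoint ?E) *\<^sub>v w) \<bullet>c w)
       \<le> Re (((?H * ?dg (\<lambda>i. d i + K * q i) * mat_adjoint ?H) *\<^sub>v w) \<bullet>c w)"
      unfolding shifted_quad[OF Umat_carrier w] rE[symmetric] sE[symmetric] DH[symmetric] sH[symmetric]
      using qD[OF w] qCm[OF w] by simp
  qed
  have W2: "b k + K * t k \<le> d k + K * q k" if k: "k < n" for k
  proof (rule weyl[OF f h _ _ _ k])
    show "\<And>i j. i \<le> j \<Longrightarrow> j < n \<Longrightarrow> b j + K * t j \<le> b i + K * t i" using p2(2) unfolding b_def t_def by blast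
    show "\<And>i j. i \<le> j \<Longrightarrow> j < n \<Longrightarrow> d j + K * q j \<le> d i + K * q i" using p3(2) unfolding d_def q_def by blast
    fix w :: "complex vec" assume w: "w \<in> carrier_vec n"
    show "Re (((?F * ?dg (\<lambda>i. b i + K * t i) * mat_adjoint ?F) *\<^sub>v w) \<bullet>c w)
       \<le> Re (((?H * ?dg (\<lambda>i. d i + K * q i) * mat_adjoint ?H) *\<^sub>v w) \<bullet>c w)"
      unfolding shifted_quad[OF Umat_carrier w] rF[symmetric] sF[symmetric] DH[symmetric] sH[symmetric]
      using qD[OF w] qR[OF w] qC[OF w] by simp
  qed

  (* gap argument *)
  have sq: "s k \<le> q k" if k: "k < n" for k
  proof (rule ccontr)
    assume "\<not> s k \<le> q k"
    hence lt: "q k < s k" by simp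
    hence "s0 (p1 k) \<noteq> q0 (p3 k)" unfolding s_def q_def by simp
    from K1[OF p1n[OF k] p3n[OF k] this] have "2 * M < K * (s k - q k)" using lt unfolding s_def q_def by simp
    moreover have "K * (s k - q k) \<le> d k - a k" using W1[OF k] by (simp add: algebra_simps)
    moreover have "d k - a k \<le> 2 * M" using Ma[OF p1n[OF k]] Md[OF p3n[OF k]] unfolding a_def d_def by simp
    ultimately show False by simp
  qed
  have tq: "t k \<le> q k" if k: "k < n" for k
  proof (rule ccontr)
    assume "\<not> t k \<le> q k"
    hence lt: "q k < t k" by simp
    hence "t0 (p2 k) \<noteq> q0 (p3 k)" unfolding t_def q_def by simp
    from K2[OF p2n[OF k] p3n[OF k] this] have "2 * M < K * (t k - q k)" using lt unfolding t_def q_def by simp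
    moreover have "K * (t k - q k) \<le> d k - b k" using W2[OF k] by (simp add: algebra_simps)
    moreover have "d k - b k \<le> 2 * M" using Mb[OF p2n[OF k]] Md[OF p3n[OF k]] unfolding b_def d_def by simp
    ultimately show False by simp
  qed
  have trs: "complex_of_real (\<Sum>i<n. s i) = complex_of_real (\<Sum>i<n. q i)"
    using trace_real[OF e, of s] trace_real[OF h, of q] sE sH by simp
  have trt: "complex_of_real (\<Sum>i<n. t i) = complex_of_real (\<Sum>i<n. q i)"
    using trace_real[OF f, of t] trace_real[OF h, of q] sF sH by simp
  have "(\<Sum>i<n. s i) = (\<Sum>i<n. q i)" using trs by (simp only: of_real_eq_iff)
  hence "(\<Sum>i<n. q i - s i) = 0" by (simp add: sum_subtractf)
  hence "\<forall>i\<in>{..<n}. q i - s i = 0" by (subst sum_nonneg_eq_0_iff[symmetric]) (use sq in auto)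
  hence seq: "s k = q k" if "k < n" for k using that by auto
  have "(\<Sum>i<n. t i) = (\<Sum>i<n. q i)" using trt by (simp only: of_real_eq_iff)
  hence "(\<Sum>i<n. q i - t i) = 0" by (simp add: sum_subtractf)
  hence "\<forall>i\<in>{..<n}. q i - t i = 0" by (subst sum_nonneg_eq_0_iff[symmetric]) (use tq in auto)
  hence teq: "t k = q k" if "k < n" for k using that by auto
  have ad: "a k \<le> d k" if "k < n" for k using W1[OF that] seq[OF that] by simp
  have bd: "b k \<le> d k" if "k < n" for k using W2[OF that] teq[OF that] by simp
  have st: "?dg s = ?dg t" by (rule eq_matI) (auto simp: seq teq)

  (* the unitary *)
  define U where "U = ?E * mat_adjoint ?F"
  have Ec: "?E \<in> carrier_mat n n" and Fc: "?F \<in> carrier_mat n n" by auto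
  have EE: "mat_adjoint ?E * ?E = 1\<^sub>m n" and EE': "?E * mat_adjoint ?E = 1\<^sub>m n"
    using Umat_UU[OF e] Umat_UU'[OF e] by auto
  have FF: "mat_adjoint ?F * ?F = 1\<^sub>m n" and FF': "?F * mat_adjoint ?F = 1\<^sub>m n"
    using Umat_UU[OF f] Umat_UU'[OF f] by auto
  have Uc: "U \<in> carrier_mat n n" unfolding U_def by simp
  have adjU: "mat_adjoint U = ?F * mat_adjoint ?E" unfolding U_def using adj_mult[OF Ec adj_carrier[OF Fc]] by simp
  have UU': "U * mat_adjoint U = 1\<^sub>m n"
  proof -
    have "U * mat_adjoint U = ?E * (mat_adjoint ?F * ?F) * mat_adjoint ?E"
      unfolding adjU unfolding U_def using Ec Fc by (simp add: assoc_mult_mat[of _ n n _ n _ n])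
    thus ?thesis using FF EE' Ec by simp
  qed
  have UU: "mat_adjoint U * U = 1\<^sub>m n"
  proof -
    have "mat_adjoint U * U = ?F * (mat_adjoint ?E * ?E) * mat_adjoint ?F"
      unfolding adjU unfolding U_def using Ec Fc by (simp add: assoc_mult_mat[of _ n n _ n _ n])
    thus ?thesis using EE FF' Fc by simp
  qed
  have unit: "unitary_mat n U" unfolding unitary_mat_def using Uc UU UU' by simp
  have R: "unitary_channel U \<rho>' = ?E * ?dg b * mat_adjoint ?E"
    unfolding unitary_channel_def U_def by (subst rF, rule channel_conj[OF Ec Fc FF dmat_carrier])
  have c1: "\<rho> * unitary_channel U \<rho>' = unitary_channel U \<rho>' * \<rho>"
    unfolding R by (subst (1 2) rE, rule commute_conj[OF e])
  have c3: "unitary_channel U \<rho>' * \<sigma> = \<sigma> * unitary_channel U \<rho>'"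
    unfolding R by (subst (1 2) sE, rule commute_conj[OF e])
  (* trace distances *)
  have "\<rho> - unitary_channel U \<rho>' = ?E * (?dg a - ?dg b) * mat_adjoint ?E"
    unfolding R by (subst rE, rule conj_minus[OF Ec dmat_carrier dmat_carrier])
  also have "?dg a - ?dg b = ?dg (\<lambda>i. a i - b i)" by (simp add: dmat_minus)
  finally have dif: "\<rho> - unitary_channel U \<rho>' = ?E * ?dg (\<lambda>i. a i - b i) * mat_adjoint ?E" .
  have td1: "trace_dist \<rho> (unitary_channel U \<rho>') = (\<Sum>i<n. \<bar>a i - b i\<bar>) / 2"
    unfolding trace_dist_def dif trace_norm_real[OF e] ..
  have td2: "trace_dist \<rho> \<rho>' = (\<Sum>i<n. \<bar>c i\<bar>) / 2"
    unfolding trace_dist_def C_def[symmetric] by (subst Cdec, simp only: trace_norm_real[OF g])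
  have tra: "mat_trace \<rho> = complex_of_real (\<Sum>i<n. a i)" by (subst rE, rule trace_real[OF e])
  have trb: "mat_trace \<rho>' = complex_of_real (\<Sum>i<n. b i)" by (subst rF, rule trace_real[OF f])
  have trd: "mat_trace D = complex_of_real (\<Sum>i<n. d i)" by (subst DH, rule trace_real[OF h])
  have trc: "mat_trace C = complex_of_real (\<Sum>i<n. c i)" by (subst Cdec, rule trace_real[OF g])
  have trm: "mat_trace Cm = complex_of_real (\<Sum>i<n. max (- c i) 0)" unfolding Cm_def by (rule trace_real[OF g])
  have e1: "mat_trace D = mat_trace \<rho> + mat_trace Cm" unfolding D_def by (rule mat_trace_plus[OF rc Cmc])
  have e2: "mat_trace C = mat_trace \<rho> - mat_trace \<rho>'" unfolding C_def by (rule mat_trace_minus[OF rc rc'])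
  have E1: "(\<Sum>i<n. d i) = (\<Sum>i<n. a i) + (\<Sum>i<n. max (- c i) 0)"
    using e1 unfolding trd tra trm by (simp only: of_real_add[symmetric] of_real_eq_iff)
  have E2: "(\<Sum>i<n. c i) = (\<Sum>i<n. a i) - (\<Sum>i<n. b i)"
    using e2 unfolding trc tra trb by (simp only: of_real_diff[symmetric] of_real_eq_iff)
  have "(\<Sum>i<n. \<bar>a i - b i\<bar>) \<le> (\<Sum>i<n. 2 * d i - a i - b i)"
    by (rule sum_mono) (use ad bd in \<open>auto simp: abs_le_iff\<close>)
  also have "\<dots> = 2 * (\<Sum>i<n. d i) - (\<Sum>i<n. a i) - (\<Sum>i<n. b i)"
    by (simp add: sum_subtractf sum_distrib_left)
  also have "\<dots> = (\<Sum>i<n. 2 * max (- c i) 0 + c i)"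
    using E1 E2 by (simp add: sum.distrib sum_distrib_left)
  also have "\<dots> = (\<Sum>i<n. \<bar>c i\<bar>)" by (intro sum.cong refl) auto
  finally have "(\<Sum>i<n. \<bar>a i - b i\<bar>) \<le> (\<Sum>i<n. \<bar>c i\<bar>)" .
  hence c2: "trace_dist \<rho> (unitary_channel U \<rho>') \<le> trace_dist \<rho> \<rho>'" unfolding td1 td2 by simp
  show ?thesis using unit c1 c2 c3 by blast
qed

end
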